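(* Consider a region discretized by the FDTD-Q scheme described in the context, with $0<\Delta t<\Delta t_{\mathrm{CFL,gen}}=2/\rho\!\left(\frac{1}{\hbar}(D_V'')^{-1/2}H(D_V'')^{-1/2}\right)$ ($\rho$ the spectral radius), and assume $\mathcal{I}_P^{n+\frac12}=0$ for all $n=0,1,\dots,n_t-1$. Then $$\|\psi^n\|_2\le\sqrt{\kappa(\mathbf{P})}\,\|\psi^0\|_2,\qquad n=0,1,\dots,n_t,$$ where $\kappa(\mathbf{P})$ is the (2-norm) condition number of $\mathbf{P}$.
   Context: Fix constants $\hbar>0$, $m>0$, cell sizes $\Delta x,\Delta y,\Delta z>0$, positive integers $n_x,n_y,n_z,n_t$ and a time step $\Delta t>0$. The region is a box made of $n_x\times n_y\times n_z$ primary cells of size $\Delta x\times\Delta y\times\Delta z$, with primary nodes $(i,j,k)$, $1\le i\le n_x+1$, $1\le j\le n_y+1$, $1\le k\le n_z+1$. Let $N=(n_x+1)(n_y+1)(n_z+1)$; vectors indexed by nodes use the ordering $i+(j-1)(n_x+1)+(k-1)(n_x+1)(n_y+1)$. Real potential values $U_{i,j,k}$ are given at the nodes; $D_U$ is the $N\times N$ diagonal matrix containing them. Let $I_p$ be the $p\times p$ identity, $\tilde I_p=\mathrm{diag}(\tfrac12,1,\dots,1,\tfrac12)$ ($p\times p$), $W_p=[0_{p\times1}\ I_p]-[I_p\ 0_{p\times 1}]$ ($p\times(p+1)$), $\otimes$ the Kronecker product, and $e\{p,q\}$ the $q\times 1$ vector with $1$ in position $p$ and zeros elsewhere. Define $D_V''=\Delta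 x\Delta y\Delta z\,\tilde I_{n_z+1}\otimes\tilde I_{n_y+1}\otimes\tilde I_{n_x+1}$; $D=[D_x\ D_y\ D_z]$ with $D_x=-I_{n_z+1}\otimes I_{n_y+1}\otimes W_{n_x}^T$, $D_y=-I_{n_z+1}\otimes W_{n_y}^T\otimes I_{n_x+1}$, $D_z=-W_{n_z}^T\otimes I_{n_y+1}\otimes I_{n_x+1}$; $D_S''=\mathrm{diag}(\Delta y\Delta z\,\tilde I_{n_z+1}\otimes\tilde I_{n_y+1}\otimes I_{n_x},\ \Delta x\Delta z\,\tilde I_{n_z+1}\otimes I_{n_y}\otimes\tilde I_{n_x+1},\ \Delta x\Delta y\,I_{n_z}\otimes\tilde I_{n_y+1}\otimes\tilde I_{n_x+1})$; $D_l'=\mathrm{diag}(\Delta x\, I_{n_x(n_y+1)(n_z+1)},\ \Delta y\, I_{(n_x+1)n_y(n_z+1)},\ \Delta z\, I_{(n_x+1)(n_y+1)n_z})$; $H=\frac{\hbar^2}{2m}D D_S''(D_l')^{-1}D^T+D_V''D_U$; $\mathbf{P}=\begin{bmatrix}D_V''&-\frac{\Delta t}{2\hbar}H\\-\frac{\Delta t}{2\hbar}H&D_V''\end{bmatrix}$. Boundary ("hanging") variables: $L=[L_W\ L_E\ L_S\ L_N\ L_B\ L_T]$ with $L_W=I_{n_z+1}\otimes I_{n_y+1}\otimes e\{1,n_x+1\}$, $L_E=I_{n_z+1}\otimes I_{n_y+1}\otimes e\{n_x+1,n_x+1\}$, $L_S=I_{n_z+1}\otimes e\{1,n_y+1\}\otimes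 I_{n_x+1}$, $L_N=I_{n_z+1}\otimes e\{n_y+1,n_y+1\}\otimes I_{n_x+1}$, $L_B=e\{1,n_z+1\}\otimes I_{n_y+1}\otimes I_{n_x+1}$, $L_T=e\{n_z+1,n_z+1\}\otimes I_{n_y+1}\otimes I_{n_x+1}$; let $M$ be the number of columns of $L$. $D_{\hat n}=\mathrm{diag}(-I_{(n_y+1)(n_z+1)},I_{(n_y+1)(n_z+1)},-I_{(n_x+1)(n_z+1)},I_{(n_x+1)(n_z+1)},-I_{(n_x+1)(n_y+1)},I_{(n_x+1)(n_y+1)})$; $D_{S,b}''=\mathrm{diag}(\Delta y\Delta z\,\tilde I_{n_z+1}\otimes\tilde I_{n_y+1},\ \Delta y\Delta z\,\tilde I_{n_z+1}\otimes\tilde I_{n_y+1},\ \Delta x\Delta z\,\tilde I_{n_z+1}\otimes\tilde I_{n_x+1},\ \Delta x\Delta z\,\tilde I_{n_z+1}\otimes\tilde I_{n_x+1},\ \Delta x\Delta y\,\tilde I_{n_y+1}\otimes\tilde I_{n_x+1},\ \Delta x\Delta y\,\tilde I_{n_y+1}\otimes\tilde I_{n_x+1})$; $H_\perp=\frac{\hbar^2}{2m}L D_{\hat n}D_{S,b}''$. FDTD-Q scheme: real vectors $\psi_R^n\in\mathbb{R}^N$ and $\psi_I^{n-\frac12}\in\mathbb{R}^N$ ($n=0,\dots,n_t$), and arbitrary boundary vectors $g_R^n\in\mathbb{R}^M$, $g_I^{n+\frac12}\in\mathbb{R}^M$ ($n=0,\dots,n_t-1$), satisfying for $n=0,\dots,n_t-1$: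 $\hbar D_V''\frac{\psi_R^{n+1}-\psi_R^n}{\Delta t}=H\psi_I^{n+\frac12}-H_\perp g_I^{n+\frac12}$ and $\hbar D_V''\frac{\psi_I^{n+\frac12}-\psi_I^{n-\frac12}}{\Delta t}=-H\psi_R^n+H_\perp g_R^n$. Let $\psi^n=\begin{bmatrix}\psi_R^n\\ \psi_I^{n-\frac12}\end{bmatrix}$, $g^{n+\frac12}=\begin{bmatrix}g_R^n\\ g_I^{n+\frac12}\end{bmatrix}$, $J_1=\begin{bmatrix}0&1\\-1&0\end{bmatrix}$. Probability current: $\mathcal{I}_P^{n+\frac12}=\frac{2}{\hbar}\left(\frac{\psi^{n+1}+\psi^n}{2}\right)^T(J_1\otimes H_\perp)g^{n+\frac12}$, $n=0,\dots,n_t-1$. *)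

theory Defs
  imports "Jordan_Normal_Form.Spectral_Radius" "Jordan_Normal_Form.Gauss_Jordan_Elimination"
begin

(* Matrices are Jordan_Normal_Form matrices over real; indices are 0-based,
   so paper index i (1-based) corresponds to i-1 here. *)

definition kron :: "real mat \<Rightarrow> real mat \<Rightarrow> real mat" where
  "kron A B = mat (dim_row A * dim_row B) (dim_col A * dim_col B)
     (\<lambda>(i,j). A $$ (i div dim_row B, j div dim_col B) * B $$ (i mod dim_row B, j mod dim_col B))"

(* identity I_p *)
definition Iden :: "nat \<Rightarrow> real mat" where "Iden p = 1\<^sub>m p"

(* \tilde I_p = diag(1/2,1,...,1,1/2) *)
definition Itil :: "nat \<Rightarrow> real mat" where
  "Itil p = mat p p (\<lambda>(i,j). if i = j then (if i = 0 \<or> i = p - 1 then 1/2 else 1) else 0)"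

(* W_p = [0_{p x 1} I_p] - [I_p 0_{p x 1}], a p x (p+1) matrix *)
definition Wm :: "nat \<Rightarrow> real mat" where
  "Wm p = mat p (p+1) (\<lambda>(i,j). (if j = i + 1 then 1 else 0) - (if j = i then 1 else 0))"

(* e{p,q}: q x 1 column with 1 in (1-based) position p *)
definition ecol :: "nat \<Rightarrow> nat \<Rightarrow> real mat" where
  "ecol p q = mat q 1 (\<lambda>(i,j). if i + 1 = p then 1 else 0)"

(* horizontal concatenation [A B] *)
definition hcat2 :: "real mat \<Rightarrow> real mat \<Rightarrow> real mat" where
  "hcat2 A B = mat (dim_row A) (dim_col A + dim_col B)
     (\<lambda>(i,j). if j < dim_col A then A $$ (i,j) else B $$ (i, j - dim_col A))"

fun hcat :: "real mat list \<Rightarrow> real mat" where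
  "hcat [A] = A"
| "hcat (A # As) = hcat2 A (hcat As)"
| "hcat [] = 0\<^sub>m 0 0"

(* block diagonal diag(A_1, ..., A_k) *)
fun bdiag :: "real mat list \<Rightarrow> real mat" where
  "bdiag [] = 0\<^sub>m 0 0"
| "bdiag (A # As) = four_block_mat A (0\<^sub>m (dim_row A) (dim_col (bdiag As)))
                      (0\<^sub>m (dim_row (bdiag As)) (dim_col A)) (bdiag As)"

(* 2x2 block matrix [[A,B],[C,D]] *)
abbreviation blk2 :: "real mat \<Rightarrow> real mat \<Rightarrow> real mat \<Rightarrow> real mat \<Rightarrow> real mat" where
  "blk2 A B C D \<equiv> four_block_mat A B C D"

(* Euclidean 2-norm of a real vector *)
definition vnorm2 :: "real vec \<Rightarrow> real" where
  "vnorm2 v = sqrt (\<Sum>i<dim_vec v. (v $ i)^2)"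

(* induced (operator) 2-norm of a real matrix *)
definition mnorm2 :: "real mat \<Rightarrow> real" where
  "mnorm2 A = Sup {vnorm2 (A *\<^sub>v x) | x. x \<in> carrier_vec (dim_col A) \<and> vnorm2 x = 1}"

(* 2-norm condition number kappa(A) = ||A||_2 ||A^{-1}||_2 *)
definition cond2 :: "real mat \<Rightarrow> real" where
  "cond2 A = mnorm2 A * mnorm2 (the (mat_inverse A))"

(* spectral radius of a real square matrix (over its complex eigenvalues) *)
definition rho :: "real mat \<Rightarrow> real" where
  "rho A = spectral_radius (map_mat complex_of_real A)"

(* ---- FDTD-Q matrices ---- *)

definition Nn :: "nat \<Rightarrow> nat \<Rightarrow> nat \<Rightarrow> nat" where
  "Nn nx ny nz = (nx+1)*(ny+1)*(nz+1)"

definition DV :: "real \<Rightarrow> real \<Rightarrow> real \<Rightarrow> nat \<Rightarrow> nat \<Rightarrow> nat \<Rightarrow> real mat" where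
  "DV dx dy dz nx ny nz = (dx*dy*dz) \<cdot>\<^sub>m kron (Itil (nz+1)) (kron (Itil (ny+1)) (Itil (nx+1)))"

definition Dop :: "nat \<Rightarrow> nat \<Rightarrow> nat \<Rightarrow> real mat" where
  "Dop nx ny nz = hcat
     [ - kron (Iden (nz+1)) (kron (Iden (ny+1)) (transpose_mat (Wm nx))),
       - kron (Iden (nz+1)) (kron (transpose_mat (Wm ny)) (Iden (nx+1))),
       - kron (transpose_mat (Wm nz)) (kron (Iden (ny+1)) (Iden (nx+1))) ]"

definition DS :: "real \<Rightarrow> real \<Rightarrow> real \<Rightarrow> nat \<Rightarrow> nat \<Rightarrow> nat \<Rightarrow> real mat" where
  "DS dx dy dz nx ny nz = bdiag
     [ (dy*dz) \<cdot>\<^sub>m kron (Itil (nz+1)) (kron (Itil (ny+1)) (Iden nx)),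
       (dx*dz) \<cdot>\<^sub>m kron (Itil (nz+1)) (kron (Iden ny) (Itil (nx+1))),
       (dx*dy) \<cdot>\<^sub>m kron (Iden nz) (kron (Itil (ny+1)) (Itil (nx+1))) ]"

definition Dl :: "real \<Rightarrow> real \<Rightarrow> real \<Rightarrow> nat \<Rightarrow> nat \<Rightarrow> nat \<Rightarrow> real mat" where
  "Dl dx dy dz nx ny nz = bdiag
     [ dx \<cdot>\<^sub>m Iden (nx*(ny+1)*(nz+1)),
       dy \<cdot>\<^sub>m Iden ((nx+1)*ny*(nz+1)),
       dz \<cdot>\<^sub>m Iden ((nx+1)*(ny+1)*nz) ]"

(* D_U: diagonal matrix of the potential values U_{i,j,k} (1-based indices) in the
   node ordering i+(j-1)(nx+1)+(k-1)(nx+1)(ny+1) *)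
definition DU :: "(nat \<Rightarrow> nat \<Rightarrow> nat \<Rightarrow> real) \<Rightarrow> nat \<Rightarrow> nat \<Rightarrow> nat \<Rightarrow> real mat" where
  "DU U nx ny nz = mat_diag (Nn nx ny nz)
     (\<lambda>p. U (p mod (nx+1) + 1) ((p div (nx+1)) mod (ny+1) + 1) (p div ((nx+1)*(ny+1)) + 1))"

definition Hmat :: "real \<Rightarrow> real \<Rightarrow> real \<Rightarrow> real \<Rightarrow> real \<Rightarrow> nat \<Rightarrow> nat \<Rightarrow> nat
                    \<Rightarrow> (nat \<Rightarrow> nat \<Rightarrow> nat \<Rightarrow> real) \<Rightarrow> real mat" where
  "Hmat hbar m dx dy dz nx ny nz U =
     (hbar^2 / (2*m)) \<cdot>\<^sub>m (Dop nx ny nz * DS dx dy dz nx ny nz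
         * the (mat_inverse (Dl dx dy dz nx ny nz)) * transpose_mat (Dop nx ny nz))
     + DV dx dy dz nx ny nz * DU U nx ny nz"

definition Pmat :: "real \<Rightarrow> real \<Rightarrow> real \<Rightarrow> real \<Rightarrow> real \<Rightarrow> nat \<Rightarrow> nat \<Rightarrow> nat
                    \<Rightarrow> (nat \<Rightarrow> nat \<Rightarrow> nat \<Rightarrow> real) \<Rightarrow> real \<Rightarrow> real mat" where
  "Pmat hbar m dx dy dz nx ny nz U dt =
     (let H = Hmat hbar m dx dy dz nx ny nz U; D = DV dx dy dz nx ny nz;
          c = - dt / (2*hbar) in
      blk2 D (c \<cdot>\<^sub>m H) (c \<cdot>\<^sub>m H) D)"

(* (D_V'')^{-1/2} *)
definition DVmhalf :: "real \<Rightarrow> real \<Rightarrow> real \<Rightarrow> nat \<Rightarrow> nat \<Rightarrow> nat \<Rightarrow> real mat" where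
  "DVmhalf dx dy dz nx ny nz =
     mat_diag (Nn nx ny nz) (\<lambda>p. 1 / sqrt (DV dx dy dz nx ny nz $$ (p,p)))"

(* Delta t_{CFL,gen} = 2 / rho((1/hbar) D_V^{-1/2} H D_V^{-1/2}) *)
definition dt_cfl :: "real \<Rightarrow> real \<Rightarrow> real \<Rightarrow> real \<Rightarrow> real \<Rightarrow> nat \<Rightarrow> nat \<Rightarrow> nat
                    \<Rightarrow> (nat \<Rightarrow> nat \<Rightarrow> nat \<Rightarrow> real) \<Rightarrow> real" where
  "dt_cfl hbar m dx dy dz nx ny nz U =
     2 / rho ((1/hbar) \<cdot>\<^sub>m (DVmhalf dx dy dz nx ny nz * Hmat hbar m dx dy dz nx ny nz U
                             * DVmhalf dx dy dz nx ny nz))"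

(* boundary matrices *)
definition Lmat :: "nat \<Rightarrow> nat \<Rightarrow> nat \<Rightarrow> real mat" where
  "Lmat nx ny nz = hcat
     [ kron (Iden (nz+1)) (kron (Iden (ny+1)) (ecol 1 (nx+1))),
       kron (Iden (nz+1)) (kron (Iden (ny+1)) (ecol (nx+1) (nx+1))),
       kron (Iden (nz+1)) (kron (ecol 1 (ny+1)) (Iden (nx+1))),
       kron (Iden (nz+1)) (kron (ecol (ny+1) (ny+1)) (Iden (nx+1))),
       kron (ecol 1 (nz+1)) (kron (Iden (ny+1)) (Iden (nx+1))),
       kron (ecol (nz+1) (nz+1)) (kron (Iden (ny+1)) (Iden (nx+1))) ]"

definition Mn :: "nat \<Rightarrow> nat \<Rightarrow> nat \<Rightarrow> nat" where
  "Mn nx ny nz = dim_col (Lmat nx ny nz)"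

definition Dnhat :: "nat \<Rightarrow> nat \<Rightarrow> nat \<Rightarrow> real mat" where
  "Dnhat nx ny nz = bdiag
     [ - Iden ((ny+1)*(nz+1)), Iden ((ny+1)*(nz+1)),
       - Iden ((nx+1)*(nz+1)), Iden ((nx+1)*(nz+1)),
       - Iden ((nx+1)*(ny+1)), Iden ((nx+1)*(ny+1)) ]"

definition DSb :: "real \<Rightarrow> real \<Rightarrow> real \<Rightarrow> nat \<Rightarrow> nat \<Rightarrow> nat \<Rightarrow> real mat" where
  "DSb dx dy dz nx ny nz = bdiag
     [ (dy*dz) \<cdot>\<^sub>m kron (Itil (nz+1)) (Itil (ny+1)),
       (dy*dz) \<cdot>\<^sub>m kron (Itil (nz+1)) (Itil (ny+1)),
       (dx*dz) \<cdot>\<^sub>m kron (Itil (nz+1)) (Itil (nx+1)),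
       (dx*dz) \<cdot>\<^sub>m kron (Itil (nz+1)) (Itil (nx+1)),
       (dx*dy) \<cdot>\<^sub>m kron (Itil (ny+1)) (Itil (nx+1)),
       (dx*dy) \<cdot>\<^sub>m kron (Itil (ny+1)) (Itil (nx+1)) ]"

definition Hperp :: "real \<Rightarrow> real \<Rightarrow> real \<Rightarrow> real \<Rightarrow> real \<Rightarrow> nat \<Rightarrow> nat \<Rightarrow> nat \<Rightarrow> real mat" where
  "Hperp hbar m dx dy dz nx ny nz =
     (hbar^2 / (2*m)) \<cdot>\<^sub>m (Lmat nx ny nz * Dnhat nx ny nz * DSb dx dy dz nx ny nz)"

(* J_1 (x) A = [[0, A], [-A, 0]] *)
definition J1kron :: "real mat \<Rightarrow> real mat" where
  "J1kron A = kron (mat 2 2 (\<lambda>(i,j). if i = 0 \<and> j = 1 then 1 else if i = 1 \<and> j = 0 then -1 else 0)) A"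

end

theory Submission
  imports Defs
begin


lemma vnorm2_sp: "vnorm2 v = sqrt (v \<bullet> v)"
  unfolding vnorm2_def scalar_prod_def by (simp add: power2_eq_square atLeast0LessThan)

lemma sp_self_nonneg: "0 \<le> (v::real vec) \<bullet> v"
  unfolding scalar_prod_def by (auto intro: sum_nonneg)

lemma sp_self_zero: assumes "(v::real vec) \<bullet> v = 0" "v \<in> carrier_vec n" shows "v = 0\<^sub>v n"
proof (rule eq_vecI)
  have "\<forall>i\<in>{0..<dim_vec v}. v $ i * v $ i = 0"
    using assms(1) unfolding scalar_prod_def by (subst sum_nonneg_eq_0_iff[symmetric]) auto
  then show "\<And>i. i < dim_vec (0\<^sub>v n) \<Longrightarrow> v $ i = 0\<^sub>v n $ i" using assms(2) by auto
qed (use assms in auto)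

lemma quad_disc:
  fixes a b c :: real
  assumes "\<And>t. 0 \<le> a + 2*t*b + t^2*c" "0 \<le> c"
  shows "b^2 \<le> a*c"
proof (cases "c > 0")
  case True
  have "0 \<le> a + 2*(-b/c)*b + (-b/c)^2*c" by (rule assms(1))
  also have "\<dots> = a - b^2/c" using True by (simp add: field_simps power2_eq_square)
  finally show ?thesis using True by (simp add: field_simps)
next
  case False
  hence c0: "c = 0" using assms(2) by auto
  show ?thesis
  proof (cases "b = 0")
    case False
    have "0 \<le> a + 2*(-(\<bar>a\<bar>+1)/(2*b))*b + (-(\<bar>a\<bar>+1)/(2*b))^2*c" by (rule assms(1))
    also have "\<dots> = a - (\<bar>a\<bar>+1)" using False c0 by (simp add: field_simps)
    finally show ?thesis by auto
  qed (simp add: c0)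
qed

lemma sym_sp: assumes "A \<in> carrier_mat n n" "transpose_mat A = A" "x \<in> carrier_vec n" "y \<in> carrier_vec n"
  shows "(A *\<^sub>v x) \<bullet> y = x \<bullet> (A *\<^sub>v (y::real vec))"
  using transpose_vec_mult_scalar[OF assms(1) assms(4) assms(3)] assms(2) by simp

lemma cs_form:
  fixes B :: "real mat"
  assumes B: "B \<in> carrier_mat n n" and sB: "transpose_mat B = B"
    and psd: "\<And>z. z \<in> carrier_vec n \<Longrightarrow> 0 \<le> (B *\<^sub>v z) \<bullet> z"
    and x: "x \<in> carrier_vec n" and y: "y \<in> carrier_vec n"
  shows "((B *\<^sub>v x) \<bullet> y)^2 \<le> ((B *\<^sub>v x) \<bullet> x) * ((B *\<^sub>v y) \<bullet> y)"
proof (rule quad_disc)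
  fix t :: real
  have sy: "(B *\<^sub>v y) \<bullet> x = (B *\<^sub>v x) \<bullet> y"
    using sym_sp[OF B sB y x] comm_scalar_prod[of y n "B *\<^sub>v x"] x y B by auto
  have "0 \<le> (B *\<^sub>v (x + t \<cdot>\<^sub>v y)) \<bullet> (x + t \<cdot>\<^sub>v y)" using psd x y by auto
  also have "\<dots> = (B *\<^sub>v x) \<bullet> x + t * ((B *\<^sub>v x) \<bullet> y) + t * ((B *\<^sub>v y) \<bullet> x) + t*t*((B *\<^sub>v y) \<bullet> y)"
    using B x y by (simp add: mult_add_distrib_mat_vec mult_mat_vec scalar_prod_add_distrib[of _ n]
        add_scalar_prod_distrib[of _ n] algebra_simps)
  finally show "0 \<le> (B *\<^sub>v x) \<bullet> x + 2 * t * ((B *\<^sub>v x) \<bullet> y) + t\<^sup>2 * ((B *\<^sub>v y) \<bullet> y)"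
    using sy by (simp add: power2_eq_square algebra_simps)
next
  show "0 \<le> (B *\<^sub>v y) \<bullet> y" using psd y .
qed

lemma cs_vec: assumes "x \<in> carrier_vec n" "y \<in> carrier_vec n"
  shows "((x::real vec) \<bullet> y)^2 \<le> (x \<bullet> x) * (y \<bullet> y)"
  using cs_form[of "1\<^sub>m n" n x y] assms by (simp add: sp_self_nonneg)

lemma cs_vnorm: assumes "x \<in> carrier_vec n" "y \<in> carrier_vec n"
  shows "\<bar>(x::real vec) \<bullet> y\<bar> \<le> vnorm2 x * vnorm2 y"
proof -
  have "\<bar>x \<bullet> y\<bar> = sqrt ((x \<bullet> y)^2)" by simp
  also have "\<dots> \<le> sqrt ((x \<bullet> x) * (y \<bullet> y))" using cs_vec[OF assms] by (rule real_sqrt_le_mono)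
  finally show ?thesis by (simp add: vnorm2_sp real_sqrt_mult)
qed

lemma vnorm2_smult: "vnorm2 (k \<cdot>\<^sub>v v) = \<bar>k\<bar> * vnorm2 (v::real vec)"
proof -
  have "(k \<cdot>\<^sub>v v) \<bullet> (k \<cdot>\<^sub>v v) = k^2 * (v \<bullet> v)"
    unfolding scalar_prod_def by (simp add: sum_distrib_left power2_eq_square algebra_simps)
  thus ?thesis by (simp add: vnorm2_sp real_sqrt_mult)
qed

lemma vnorm2_nonneg: "0 \<le> vnorm2 v" unfolding vnorm2_def by (simp add: sum_nonneg)

lemma vnorm2_sq: "(vnorm2 v)^2 = v \<bullet> (v::real vec)"
  by (simp add: vnorm2_sp sp_self_nonneg)

lemma mat_vec_bound:
  fixes A :: "real mat"
  assumes A: "A \<in> carrier_mat r c" and x: "x \<in> carrier_vec c"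
  shows "vnorm2 (A *\<^sub>v x) \<le> sqrt (\<Sum>i<r. row A i \<bullet> row A i) * vnorm2 x"
proof -
  have "(A *\<^sub>v x) \<bullet> (A *\<^sub>v x) = (\<Sum>i<r. (row A i \<bullet> x)^2)"
    using A unfolding scalar_prod_def[of "A *\<^sub>v x"] by (simp add: power2_eq_square atLeast0LessThan)
  also have "\<dots> \<le> (\<Sum>i<r. (row A i \<bullet> row A i) * (x \<bullet> x))"
    by (rule sum_mono, rule cs_vec[of _ c], use A x in auto)
  also have "\<dots> = (\<Sum>i<r. row A i \<bullet> row A i) * (x \<bullet> x)" by (simp add: sum_distrib_right)
  finally have "sqrt ((A *\<^sub>v x) \<bullet> (A *\<^sub>v x)) \<le> sqrt ((\<Sum>i<r. row A i \<bullet> row A i) * (x \<bullet> x))"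
    by (rule real_sqrt_le_mono)
  thus ?thesis by (simp add: vnorm2_sp real_sqrt_mult)
qed

lemma mnorm2_bound:
  fixes A :: "real mat"
  assumes A: "A \<in> carrier_mat r c" and x: "x \<in> carrier_vec c"
  shows "vnorm2 (A *\<^sub>v x) \<le> mnorm2 A * vnorm2 x"
proof (cases "vnorm2 x = 0")
  case True
  hence "x \<bullet> x = 0" using vnorm2_sq[of x] by simp
  hence "x = 0\<^sub>v c" using sp_self_zero x by blast
  hence "A *\<^sub>v x = 0\<^sub>v r" using A by auto
  hence "vnorm2 (A *\<^sub>v x) = 0" unfolding vnorm2_def by simp
  thus ?thesis using True by simp
next
  case False
  define s where "s = vnorm2 x"
  have s: "s > 0" using False vnorm2_nonneg[of x] unfolding s_def by auto
  define y where "y = (1/s) \<cdot>\<^sub>v x"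
  have y: "y \<in> carrier_vec (dim_col A)" "vnorm2 y = 1" using x s A unfolding y_def
    by (auto simp: vnorm2_smult s_def)
  let ?S = "{vnorm2 (A *\<^sub>v x) | x. x \<in> carrier_vec (dim_col A) \<and> vnorm2 x = 1}"
  have bdd: "bdd_above ?S"
  proof (rule bdd_aboveI)
    fix z assume "z \<in> ?S"
    then obtain w where w: "w \<in> carrier_vec c" "vnorm2 w = 1" "z = vnorm2 (A *\<^sub>v w)" using A by auto
    show "z \<le> sqrt (\<Sum>i<r. row A i \<bullet> row A i)" using mat_vec_bound[OF A w(1)] w by simp
  qed
  have "vnorm2 (A *\<^sub>v y) \<in> ?S" using y by auto
  hence le: "vnorm2 (A *\<^sub>v y) \<le> mnorm2 A" unfolding mnorm2_def using bdd by (rule cSup_upper)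
  have "A *\<^sub>v y = (1/s) \<cdot>\<^sub>v (A *\<^sub>v x)" unfolding y_def using A x by (simp add: mult_mat_vec)
  hence "vnorm2 (A *\<^sub>v y) = vnorm2 (A *\<^sub>v x) / s" using s by (simp add: vnorm2_smult)
  with le s show ?thesis unfolding s_def by (simp add: field_simps)
qed

definition Efun :: "real mat \<Rightarrow> real mat \<Rightarrow> real \<Rightarrow> real vec \<Rightarrow> real vec \<Rightarrow> real" where
  "Efun D H a R I = R \<bullet> (D *\<^sub>v R) + I \<bullet> (D *\<^sub>v I) - a * (R \<bullet> (H *\<^sub>v I))"

lemma energy_step:
  fixes D H :: "real mat" and R R' I I' uR uI :: "real vec"
  assumes D: "D \<in> carrier_mat n n" and H: "H \<in> carrier_mat n n"
    and sD: "transpose_mat D = D" and sH: "transpose_mat H = H"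
    and v: "R \<in> carrier_vec n" "R' \<in> carrier_vec n" "I \<in> carrier_vec n" "I' \<in> carrier_vec n"
       "uR \<in> carrier_vec n" "uI \<in> carrier_vec n"
    and hb: "hbar \<noteq> 0" and dt: "dt \<noteq> 0"
    and eqR: "hbar \<cdot>\<^sub>v (D *\<^sub>v ((1/dt) \<cdot>\<^sub>v (R' - R))) = H *\<^sub>v I' - uI"
    and eqI: "hbar \<cdot>\<^sub>v (D *\<^sub>v ((1/dt) \<cdot>\<^sub>v (I' - I))) = - (H *\<^sub>v R) + uR"
  shows "Efun D H (dt/hbar) R' I' - Efun D H (dt/hbar) R I
     = - (dt/hbar) * ((R' + R) \<bullet> uI - (I' + I) \<bullet> uR)"
proof -
  note cv = v D H
  have e1: "(R' + R) \<bullet> (hbar \<cdot>\<^sub>v (D *\<^sub>v ((1/dt) \<cdot>\<^sub>v (R' - R)))) = (R' + R) \<bullet> (H *\<^sub>v I' - uI)"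
    using eqR by simp
  have e2: "(I' + I) \<bullet> (hbar \<cdot>\<^sub>v (D *\<^sub>v ((1/dt) \<cdot>\<^sub>v (I' - I)))) = (I' + I) \<bullet> (- (H *\<^sub>v R) + uR)"
    using eqI by simp
  have l1: "(R' + R) \<bullet> (hbar \<cdot>\<^sub>v (D *\<^sub>v ((1/dt) \<cdot>\<^sub>v (R' - R)))) =
     (hbar/dt) * (R' \<bullet> (D *\<^sub>v R') - R' \<bullet> (D *\<^sub>v R) + R \<bullet> (D *\<^sub>v R') - R \<bullet> (D *\<^sub>v R))"
    using cv by (simp add: mult_mat_vec mult_minus_distrib_mat_vec add_scalar_prod_distrib[of _ n]
        scalar_prod_minus_distrib[of _ n] algebra_simps)
  have r1: "(R' + R) \<bullet> (H *\<^sub>v I' - uI) = R' \<bullet> (H *\<^sub>v I') + R \<bullet> (H *\<^sub>v I') - (R' + R) \<bullet> uI"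
    using cv by (simp add: add_scalar_prod_distrib[of _ n] scalar_prod_minus_distrib[of _ n] algebra_simps)
  have l2: "(I' + I) \<bullet> (hbar \<cdot>\<^sub>v (D *\<^sub>v ((1/dt) \<cdot>\<^sub>v (I' - I)))) =
     (hbar/dt) * (I' \<bullet> (D *\<^sub>v I') - I' \<bullet> (D *\<^sub>v I) + I \<bullet> (D *\<^sub>v I') - I \<bullet> (D *\<^sub>v I))"
    using cv by (simp add: mult_mat_vec mult_minus_distrib_mat_vec add_scalar_prod_distrib[of _ n]
        scalar_prod_minus_distrib[of _ n] algebra_simps)
  have r2: "(I' + I) \<bullet> (- (H *\<^sub>v R) + uR) = - (I' \<bullet> (H *\<^sub>v R)) - I \<bullet> (H *\<^sub>v R) + (I' + I) \<bullet> uR"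
    using cv by (simp add: add_scalar_prod_distrib[of _ n] scalar_prod_add_distrib[of _ n]
          scalar_prod_uminus_right algebra_simps)
  have s1: "R' \<bullet> (D *\<^sub>v R) = R \<bullet> (D *\<^sub>v R')"
    using sym_sp[OF D sD v(1) v(2)] comm_scalar_prod[of R' n "D *\<^sub>v R"] cv by simp
  have s2: "I' \<bullet> (D *\<^sub>v I) = I \<bullet> (D *\<^sub>v I')"
    using sym_sp[OF D sD v(3) v(4)] comm_scalar_prod[of I' n "D *\<^sub>v I"] cv by simp
  have s3: "I' \<bullet> (H *\<^sub>v R) = R \<bullet> (H *\<^sub>v I')"
    using sym_sp[OF H sH v(1) v(4)] comm_scalar_prod[of I' n "H *\<^sub>v R"] cv by simp
  have s4: "I \<bullet> (H *\<^sub>v R) = R \<bullet> (H *\<^sub>v I)"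
    using sym_sp[OF H sH v(1) v(3)] comm_scalar_prod[of I n "H *\<^sub>v R"] cv by simp
  define a where "a = dt/hbar"
  have ha: "a * (hbar/dt) = 1" using hb dt unfolding a_def by simp
  have A1: "R' \<bullet> (D *\<^sub>v R') - R \<bullet> (D *\<^sub>v R) = a * (R' \<bullet> (H *\<^sub>v I') + R \<bullet> (H *\<^sub>v I') - (R' + R) \<bullet> uI)"
  proof -
    have "(hbar/dt) * (R' \<bullet> (D *\<^sub>v R') - R \<bullet> (D *\<^sub>v R)) = R' \<bullet> (H *\<^sub>v I') + R \<bullet> (H *\<^sub>v I') - (R' + R) \<bullet> uI"
      using e1 l1 r1 s1 by simp
    hence "(a * (hbar/dt)) * (R' \<bullet> (D *\<^sub>v R') - R \<bullet> (D *\<^sub>v R)) = a * (R' \<bullet> (H *\<^sub>v I') + R \<bullet> (H *\<^sub>v I') - (R' + R) \<bullet> uI)"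
      by (simp only: mult.assoc)
    thus ?thesis by (simp only: ha mult.left_neutral)
  qed
  have A2: "I' \<bullet> (D *\<^sub>v I') - I \<bullet> (D *\<^sub>v I) = a * (- (R \<bullet> (H *\<^sub>v I')) - R \<bullet> (H *\<^sub>v I) + (I' + I) \<bullet> uR)"
  proof -
    have "(hbar/dt) * (I' \<bullet> (D *\<^sub>v I') - I \<bullet> (D *\<^sub>v I)) = - (R \<bullet> (H *\<^sub>v I')) - R \<bullet> (H *\<^sub>v I) + (I' + I) \<bullet> uR"
      using e2 l2 r2 s2 s3 s4 by simp
    hence "(a * (hbar/dt)) * (I' \<bullet> (D *\<^sub>v I') - I \<bullet> (D *\<^sub>v I)) = a * (- (R \<bullet> (H *\<^sub>v I')) - R \<bullet> (H *\<^sub>v I) + (I' + I) \<bullet> uR)"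
      by (simp only: mult.assoc)
    thus ?thesis by (simp only: ha mult.left_neutral)
  qed
  show ?thesis unfolding Efun_def a_def[symmetric] using A1 A2 by (simp add: algebra_simps)
qed

section \<open>Structure\<close>

lemma kron_dims[simp]: "dim_row (kron A B) = dim_row A * dim_row B" "dim_col (kron A B) = dim_col A * dim_col B"
  unfolding kron_def by auto

lemma kron_index: "i < dim_row A * dim_row B \<Longrightarrow> j < dim_col A * dim_col B \<Longrightarrow>
  kron A B $$ (i,j) = A $$ (i div dim_row B, j div dim_col B) * B $$ (i mod dim_row B, j mod dim_col B)"
  unfolding kron_def by auto

lemma mat_diag_dims[simp]: "dim_row (mat_diag n f) = n" "dim_col (mat_diag n f) = n"
  unfolding mat_diag_def by auto

lemma mat_diag_index: "i < n \<Longrightarrow> j < n \<Longrightarrow> mat_diag n f $$ (i,j) = (if i = j then f i else 0)"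
  unfolding mat_diag_def by auto

lemma kron_diag: "kron (mat_diag a f) (mat_diag b g) = mat_diag (a*b) (\<lambda>i. f (i div b) * g (i mod b))"
proof (rule eq_matI)
  fix i j assume i: "i < dim_row (mat_diag (a*b) (\<lambda>i. f (i div b) * g (i mod b)))"
    and j: "j < dim_col (mat_diag (a*b) (\<lambda>i. f (i div b) * g (i mod b)))"
  hence ij: "i < a*b" "j < a*b" by auto
  hence b: "b > 0" by (cases b) auto
  have lt: "i div b < a" "j div b < a" "i mod b < b" "j mod b < b"
    using ij b by (auto simp: less_mult_imp_div_less)
  have eq: "i = j \<longleftrightarrow> (i div b = j div b \<and> i mod b = j mod b)"
    by (metis div_mult_mod_eq)
  show "kron (mat_diag a f) (mat_diag b g) $$ (i, j) = mat_diag (a*b) (\<lambda>i. f (i div b) * g (i mod b)) $$ (i, j)"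
    using ij lt eq by (simp add: kron_index mat_diag_index)
qed auto

definition itf :: "nat \<Rightarrow> nat \<Rightarrow> real" where
  "itf p i = (if i = 0 \<or> i = p - 1 then 1/2 else 1)"

lemma itf_pos: "itf p i > 0" unfolding itf_def by auto

lemma Itil_diag: "Itil p = mat_diag p (itf p)"
  by (rule eq_matI, auto simp: Itil_def mat_diag_index itf_def)

lemma Iden_diag: "Iden p = mat_diag p (\<lambda>_. 1)"
  by (simp add: Iden_def)

lemma smult_diag: "c \<cdot>\<^sub>m mat_diag n (f::nat\<Rightarrow>real) = mat_diag n (\<lambda>i. c * f i)"
  by (rule eq_matI, auto simp: mat_diag_index mat_diag_def)

lemma uminus_diag: "- mat_diag n (f::nat\<Rightarrow>real) = mat_diag n (\<lambda>i. - f i)"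
  by (rule eq_matI, auto simp: mat_diag_index mat_diag_def)

lemma transpose_diag: "transpose_mat (mat_diag n f) = mat_diag n f"
  by (rule eq_matI, auto simp: mat_diag_index)

lemma four_block_diag: "four_block_mat (mat_diag a f) (0\<^sub>m a b) (0\<^sub>m b a) (mat_diag b g)
   = mat_diag (a+b) (\<lambda>i. if i < a then f i else g (i - a))"
  by (rule eq_matI, auto simp: mat_diag_index)

lemma four_block_diag0: "four_block_mat (mat_diag a f) (0\<^sub>m a 0) (0\<^sub>m 0 a) (0\<^sub>m 0 0) = mat_diag a f"
  by (rule eq_matI, auto simp: mat_diag_index)

lemma hcat2_dims[simp]: "dim_row (hcat2 A B) = dim_row A" "dim_col (hcat2 A B) = dim_col A + dim_col B"
  unfolding hcat2_def by auto

lemma Wm_dims[simp]: "dim_row (Wm p) = p" "dim_col (Wm p) = p + 1" unfolding Wm_def by auto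
lemma ecol_dims[simp]: "dim_row (ecol p q) = q" "dim_col (ecol p q) = 1" unfolding ecol_def by auto
lemma Iden_dims[simp]: "dim_row (Iden p) = p" "dim_col (Iden p) = p" unfolding Iden_def by auto
lemma Itil_dims[simp]: "dim_row (Itil p) = p" "dim_col (Itil p) = p" unfolding Itil_def by auto

lemma bdiag_dims[simp]: "dim_row (bdiag As) = sum_list (map dim_row As)" "dim_col (bdiag As) = sum_list (map dim_col As)"
  by (induct As) auto

lemma DV_diag: "\<exists>d. DV dx dy dz nx ny nz = mat_diag ((nz+1)*((ny+1)*(nx+1))) d \<and>
   (dx > 0 \<longrightarrow> dy > 0 \<longrightarrow> dz > 0 \<longrightarrow> (\<forall>i. d i > 0))"
  unfolding DV_def Itil_diag kron_diag smult_diag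
  by (intro exI conjI refl, auto intro!: mult_pos_pos itf_pos)

lemma DS_diag: "\<exists>f. DS dx dy dz nx ny nz = mat_diag ((nz+1)*((ny+1)*nx) + ((nz+1)*(ny*(nx+1)) + (nz*((ny+1)*(nx+1)) + 0))) f"
  unfolding DS_def Itil_diag Iden_diag kron_diag smult_diag
  apply (simp add: four_block_diag four_block_diag0 del: mat_diag_one)
  by (rule exI, rule refl)

lemma Dl_diag: "\<exists>f. Dl dx dy dz nx ny nz = mat_diag (nx*(ny+1)*(nz+1) + ((nx+1)*ny*(nz+1) + ((nx+1)*(ny+1)*nz + 0))) f
   \<and> (dx > 0 \<longrightarrow> dy > 0 \<longrightarrow> dz > 0 \<longrightarrow> (\<forall>i. f i > 0))"
  unfolding Dl_def Iden_diag kron_diag smult_diag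
  apply (simp add: four_block_diag four_block_diag0 del: mat_diag_one)
  apply (rule exI, rule conjI, rule refl)
  by auto

lemma mat_inverse_unique:
  fixes A B :: "real mat"
  assumes A: "A \<in> carrier_mat n n" and B: "B \<in> carrier_mat n n" and AB: "A * B = 1\<^sub>m n" and BA: "B * A = 1\<^sub>m n"
  shows "mat_inverse A = Some B"
proof -
  have "A \<in> Units (ring_mat TYPE(real) n ())" using A B AB BA unfolding Units_def ring_mat_def by auto
  hence "mat_inverse A \<noteq> None" using mat_inverse(1)[OF A, of "()"] by auto
  then obtain C where C: "mat_inverse A = Some C" by auto
  from mat_inverse(2)[OF A C] have CA: "C * A = 1\<^sub>m n" and Cc: "C \<in> carrier_mat n n" by auto
  have "C = C * (A * B)" using AB Cc by simp
  also have "\<dots> = (C * A) * B" using A B Cc by (simp add: assoc_mult_mat)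
  also have "\<dots> = B" using CA B by simp
  finally show ?thesis using C by simp
qed

lemma inverse_diag:
  assumes "\<And>i. i < n \<Longrightarrow> f i \<noteq> (0::real)"
  shows "mat_inverse (mat_diag n f) = Some (mat_diag n (\<lambda>i. 1 / f i))"
proof (rule mat_inverse_unique[of _ n])
  have "mat_diag n (\<lambda>i. f i * (1 / f i)) = 1\<^sub>m n"
    by (rule eq_matI, auto simp: mat_diag_index assms)
  thus "mat_diag n f * mat_diag n (\<lambda>i. 1 / f i) = 1\<^sub>m n" by simp
  have "mat_diag n (\<lambda>i. (1 / f i) * f i) = 1\<^sub>m n"
    by (rule eq_matI, auto simp: mat_diag_index assms)
  thus "mat_diag n (\<lambda>i. 1 / f i) * mat_diag n f = 1\<^sub>m n" by simp
qed auto

lemma transpose_smult: "transpose_mat (c \<cdot>\<^sub>m A) = c \<cdot>\<^sub>m transpose_mat (A :: real mat)"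
  by (rule eq_matI, auto)

lemma sandwich_sym:
  fixes A :: "real mat"
  assumes A: "A \<in> carrier_mat n k"
  shows "transpose_mat (A * mat_diag k f * transpose_mat A) = A * mat_diag k f * transpose_mat A"
proof -
  have AD: "A * mat_diag k f \<in> carrier_mat n k" using A by simp
  have "transpose_mat (A * mat_diag k f * transpose_mat A) = A * transpose_mat (A * mat_diag k f)"
    using transpose_mult[OF AD, of "transpose_mat A" n] A by simp
  also have "transpose_mat (A * mat_diag k f) = mat_diag k f * transpose_mat A"
    using transpose_mult[OF A, of "mat_diag k f" k] by (simp add: transpose_diag)
  also have "A * (mat_diag k f * transpose_mat A) = A * mat_diag k f * transpose_mat A"
    using A by (simp add: assoc_mult_mat[symmetric, of _ n k _ k _ n])
  finally show ?thesis .
qed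

lemma Dop_carrier: "Dop nx ny nz \<in> carrier_mat ((nz+1)*((ny+1)*(nx+1)))
   (nx*(ny+1)*(nz+1) + ((nx+1)*ny*(nz+1) + ((nx+1)*(ny+1)*nz + 0)))"
proof -
  have r: "dim_row (Dop nx ny nz) = (nz+1)*((ny+1)*(nx+1))" by (simp add: Dop_def)
  have c: "dim_col (Dop nx ny nz) = (nz+1)*((ny+1)*nx) + ((nz+1)*(ny*(nx+1)) + nz*((ny+1)*(nx+1)))"
    by (simp add: Dop_def)
  have e: "(nz+1)*((ny+1)*nx) + ((nz+1)*(ny*(nx+1)) + nz*((ny+1)*(nx+1)))
     = nx*(ny+1)*(nz+1) + ((nx+1)*ny*(nz+1) + ((nx+1)*(ny+1)*nz + 0))"
    by (simp only: mult.commute mult.left_commute add_0_right)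
  show ?thesis unfolding carrier_mat_def using r c e by simp
qed

lemma Nn_eq: "Nn nx ny nz = (nz+1)*((ny+1)*(nx+1))" unfolding Nn_def by (simp add: algebra_simps)

lemma H_struct:
  assumes "dx > 0" "dy > 0" "dz > 0"
  shows "Hmat hbar m dx dy dz nx ny nz U \<in> carrier_mat (Nn nx ny nz) (Nn nx ny nz)
    \<and> transpose_mat (Hmat hbar m dx dy dz nx ny nz U) = Hmat hbar m dx dy dz nx ny nz U"
proof -
  let ?N = "(nz+1)*((ny+1)*(nx+1))"
  let ?K = "nx*(ny+1)*(nz+1) + ((nx+1)*ny*(nz+1) + ((nx+1)*(ny+1)*nz + 0))"
  obtain fS where fS: "DS dx dy dz nx ny nz = mat_diag ((nz+1)*((ny+1)*nx) + ((nz+1)*(ny*(nx+1)) + (nz*((ny+1)*(nx+1)) + 0))) fS"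
    using DS_diag by blast
  have KK: "(nz+1)*((ny+1)*nx) + ((nz+1)*(ny*(nx+1)) + (nz*((ny+1)*(nx+1)) + 0)) = ?K" by (simp add: algebra_simps)
  obtain fl where fl: "Dl dx dy dz nx ny nz = mat_diag ?K fl" and flp: "\<And>i. fl i > 0"
    using Dl_diag assms by blast
  have inv: "the (mat_inverse (Dl dx dy dz nx ny nz)) = mat_diag ?K (\<lambda>i. 1 / fl i)"
    unfolding fl using inverse_diag[of ?K fl] flp by (simp add: less_imp_neq[symmetric])
  obtain d where d: "DV dx dy dz nx ny nz = mat_diag ?N d" using DV_diag by blast
  have DU: "DU U nx ny nz = mat_diag ?N (\<lambda>p. U (p mod (nx+1) + 1) ((p div (nx+1)) mod (ny+1) + 1) (p div ((nx+1)*(ny+1)) + 1))"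
    unfolding DU_def Nn_eq ..
  have Dop: "Dop nx ny nz \<in> carrier_mat ?N ?K" by (rule Dop_carrier)
  have eq: "Hmat hbar m dx dy dz nx ny nz U = (hbar^2/(2*m)) \<cdot>\<^sub>m (Dop nx ny nz * mat_diag ?K (\<lambda>i. fS i * (1 / fl i)) * transpose_mat (Dop nx ny nz))
      + mat_diag ?N (\<lambda>i. d i * U (i mod (nx+1) + 1) ((i div (nx+1)) mod (ny+1) + 1) (i div ((nx+1)*(ny+1)) + 1))"
    unfolding Hmat_def inv fS KK d DU
    using Dop by (simp add: assoc_mult_mat[of _ ?N ?K _ ?K _ ?K])
  let ?X = "(hbar^2/(2*m)) \<cdot>\<^sub>m (Dop nx ny nz * mat_diag ?K (\<lambda>i. fS i * (1 / fl i)) * transpose_mat (Dop nx ny nz))"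
  let ?Y = "mat_diag ?N (\<lambda>i. d i * U (i mod (nx+1) + 1) ((i div (nx+1)) mod (ny+1) + 1) (i div ((nx+1)*(ny+1)) + 1))"
  have Xc: "?X \<in> carrier_mat ?N ?N"
    by (rule smult_carrier_mat, rule mult_carrier_mat[of _ ?N ?K], rule mult_carrier_mat[of _ ?N ?K], rule Dop, simp, subst transpose_carrier_mat, rule Dop)
  have Yc: "?Y \<in> carrier_mat ?N ?N" by (rule mat_diag_dim)
  have "transpose_mat (?X + ?Y) = transpose_mat ?X + transpose_mat ?Y" by (rule transpose_add[OF Xc Yc])
  also have "transpose_mat ?X = ?X" unfolding transpose_smult sandwich_sym[OF Dop] ..
  also have "transpose_mat ?Y = ?Y" by (rule transpose_diag)
  finally show ?thesis unfolding eq Nn_eq using Xc Yc by simp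
qed

lemma Hp_carrier: "Hperp hbar m dx dy dz nx ny nz \<in> carrier_mat (Nn nx ny nz) (Mn nx ny nz)"
proof -
  have r: "dim_row (Hperp hbar m dx dy dz nx ny nz) = (nz+1)*((ny+1)*(nx+1))"
    by (simp add: Hperp_def Lmat_def)
  have c: "dim_col (Hperp hbar m dx dy dz nx ny nz) = dim_col (DSb dx dy dz nx ny nz)"
    by (simp add: Hperp_def)
  have c2: "dim_col (DSb dx dy dz nx ny nz) = dim_col (Lmat nx ny nz)"
    by (simp add: DSb_def Lmat_def ac_simps)
  show ?thesis unfolding carrier_mat_def Mn_def Nn_eq using r c c2 by simp
qed

lemma J1kron_block:
  assumes A: "A \<in> carrier_mat r c"
  shows "J1kron A = four_block_mat (0\<^sub>m r c) A (- A) (0\<^sub>m r c)"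
proof (rule eq_matI)
  fix i j assume i: "i < dim_row (four_block_mat (0\<^sub>m r c) A (- A) (0\<^sub>m r c))"
    and j: "j < dim_col (four_block_mat (0\<^sub>m r c) A (- A) (0\<^sub>m r c))"
  hence i2: "i < 2 * r" and j2: "j < 2 * c" by auto
  have di: "(i < r \<longrightarrow> i div r = 0 \<and> i mod r = i) \<and> (\<not> i < r \<longrightarrow> i div r = 1 \<and> i mod r = i - r)"
    using i2 by (auto simp: div_eq_0_iff le_div_geq le_mod_geq)
  have dj: "(j < c \<longrightarrow> j div c = 0 \<and> j mod c = j) \<and> (\<not> j < c \<longrightarrow> j div c = 1 \<and> j mod c = j - c)"
    using j2 by (auto simp: div_eq_0_iff le_div_geq le_mod_geq)
  show "J1kron A $$ (i, j) = four_block_mat (0\<^sub>m r c) A (- A) (0\<^sub>m r c) $$ (i, j)"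
    unfolding J1kron_def using A i2 j2 di dj
    by (subst kron_index, auto)
qed (use A in \<open>auto simp: J1kron_def\<close>)

lemma J1kron_mult:
  assumes A: "A \<in> carrier_mat r c" and x: "x \<in> carrier_vec c" and y: "y \<in> carrier_vec c"
  shows "J1kron A *\<^sub>v (x @\<^sub>v y) = (A *\<^sub>v y) @\<^sub>v (- (A *\<^sub>v (x :: real vec)))"
proof -
  have "J1kron A *\<^sub>v (x @\<^sub>v y) = (0\<^sub>m r c *\<^sub>v x + A *\<^sub>v y) @\<^sub>v ((- A) *\<^sub>v x + 0\<^sub>m r c *\<^sub>v y)"
    unfolding J1kron_block[OF A]
    by (rule four_block_mat_mult_vec[OF _ A _ _ x y], use A in auto)
  also have "0\<^sub>m r c *\<^sub>v x + A *\<^sub>v y = A *\<^sub>v y" using A x y by auto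
  also have "(- A) *\<^sub>v x + 0\<^sub>m r c *\<^sub>v y = - (A *\<^sub>v x)"
    by (rule eq_vecI, use A x y in \<open>auto simp: scalar_prod_def sum_negf\<close>)
  finally show ?thesis .
qed

section \<open>Spectral part\<close>

lemma smult_mat_vec: "A \<in> carrier_mat n n \<Longrightarrow> v \<in> carrier_vec n \<Longrightarrow> (c \<cdot>\<^sub>m A) *\<^sub>v v = c \<cdot>\<^sub>v (A *\<^sub>v (v :: 'a :: comm_ring_1 vec))"
  by (rule eq_vecI, auto simp: scalar_prod_def sum_distrib_left ac_simps)

lemma sr_smult_le:
  fixes A :: "complex mat"
  assumes A: "A \<in> carrier_mat n n" and n: "n > 0" and c: "c > 0"
  shows "spectral_radius (complex_of_real c \<cdot>\<^sub>m A) \<le> c * spectral_radius A"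
proof -
  let ?B = "complex_of_real c \<cdot>\<^sub>m A"
  have B: "?B \<in> carrier_mat n n" using A by simp
  from spectral_radius_mem_max(1)[OF B n] obtain mu where mu: "mu \<in> spectrum ?B"
    and eq: "spectral_radius ?B = norm mu" by auto
  from mu obtain v where ev: "eigenvector ?B v mu" unfolding spectrum_def eigenvalue_def by auto
  hence v: "v \<in> carrier_vec n" "v \<noteq> 0\<^sub>v n" "?B *\<^sub>v v = mu \<cdot>\<^sub>v v" using B unfolding eigenvector_def by auto
  have "A *\<^sub>v v = (1 / complex_of_real c) \<cdot>\<^sub>v (?B *\<^sub>v v)"
    using smult_mat_vec[OF A v(1)] c by (simp add: smult_smult_assoc)
  also have "\<dots> = (mu / complex_of_real c) \<cdot>\<^sub>v v" using v(3) by (simp add: smult_smult_assoc)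
  finally have "eigenvector A v (mu / complex_of_real c)" using v A unfolding eigenvector_def by auto
  hence "norm (mu / complex_of_real c) \<in> norm ` spectrum A" unfolding spectrum_def eigenvalue_def by auto
  from spectral_radius_mem_max(2)[OF A n this] have "norm mu / c \<le> spectral_radius A"
    using c by (simp add: norm_divide)
  thus ?thesis using eq c by (simp add: field_simps)
qed

lemma rho_smult_le:
  fixes A :: "real mat"
  assumes A: "A \<in> carrier_mat n n" and n: "n > 0" and c: "c > 0"
  shows "rho (c \<cdot>\<^sub>m A) \<le> c * rho A"
proof -
  have "map_mat complex_of_real (c \<cdot>\<^sub>m A) = complex_of_real c \<cdot>\<^sub>m map_mat complex_of_real A"
    by (rule eq_matI, auto)
  thus ?thesis unfolding rho_def using sr_smult_le[of "map_mat complex_of_real A" n c] A n c by simp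
qed

lemma pow_bounded:
  fixes S :: "real mat"
  assumes S: "S \<in> carrier_mat n n" and r: "rho S < 1"
  shows "\<exists>C. \<forall>k (x::real vec). x \<in> carrier_vec n \<longrightarrow> vnorm2 (S ^\<^sub>m k *\<^sub>v x) \<le> C * vnorm2 x"
proof -
  have Sc: "map_mat complex_of_real S \<in> carrier_mat n n" using S by simp
  from spectral_radius_jnf_norm_bound_less_1_upper_triangular[OF Sc] r
  obtain c where c: "\<And>k. norm_bound (map_mat complex_of_real S ^\<^sub>m k) c" unfolding rho_def by auto
  have ent: "\<bar>(S ^\<^sub>m k) $$ (i,j)\<bar> \<le> c" if "i < n" "j < n" for i j k
  proof -
    have "map_mat complex_of_real (S ^\<^sub>m k) = map_mat complex_of_real S ^\<^sub>m k"
      by (rule of_real_hom.mat_hom_pow[OF S])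
    with c[of k] that S show ?thesis unfolding norm_bound_def
      by (metis carrier_matD index_map_mat norm_of_real pow_mat_dim_square)
  qed
  show ?thesis
  proof (intro exI allI impI)
    fix k and x :: "real vec" assume x: "x \<in> carrier_vec n"
    have Sk: "S ^\<^sub>m k \<in> carrier_mat n n" using S by simp
    have "(\<Sum>i<n. row (S ^\<^sub>m k) i \<bullet> row (S ^\<^sub>m k) i) \<le> (\<Sum>i<n. real n * c^2)"
    proof (rule sum_mono)
      fix i assume "i \<in> {..<n}"
      hence i: "i < n" by auto
      have "row (S ^\<^sub>m k) i \<bullet> row (S ^\<^sub>m k) i = (\<Sum>j<n. ((S ^\<^sub>m k) $$ (i,j))^2)"
        using Sk i S unfolding scalar_prod_def by (simp add: power2_eq_square atLeast0LessThan carrier_matD)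
      also have "\<dots> \<le> (\<Sum>j<n. c^2)"
      proof (rule sum_mono)
        fix j assume "j \<in> {..<n}"
        hence "\<bar>(S ^\<^sub>m k) $$ (i,j)\<bar> \<le> c" using ent i by auto
        thus "((S ^\<^sub>m k) $$ (i,j))^2 \<le> c^2" by (metis power2_abs power_mono abs_ge_zero)
      qed
      finally show "row (S ^\<^sub>m k) i \<bullet> row (S ^\<^sub>m k) i \<le> real n * c^2" by simp
    qed
    hence "sqrt (\<Sum>i<n. row (S ^\<^sub>m k) i \<bullet> row (S ^\<^sub>m k) i) \<le> sqrt (real n * (real n * c^2))"
      by (intro real_sqrt_le_mono, simp)
    hence "sqrt (\<Sum>i<n. row (S ^\<^sub>m k) i \<bullet> row (S ^\<^sub>m k) i) * vnorm2 x \<le> sqrt (real n * (real n * c^2)) * vnorm2 x"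
      by (rule mult_right_mono, simp add: vnorm2_nonneg)
    with mat_vec_bound[OF Sk x]
    show "vnorm2 (S ^\<^sub>m k *\<^sub>v x) \<le> sqrt (real n * (real n * c^2)) * vnorm2 x" by linarith
  qed
qed

lemma pv_carrier[simp]: "S \<in> carrier_mat n n \<Longrightarrow> x \<in> carrier_vec n \<Longrightarrow> S ^\<^sub>m k *\<^sub>v x \<in> carrier_vec n"
  by (metis mult_mat_vec_carrier pow_carrier_mat)

lemma powv_Suc: "S \<in> carrier_mat n n \<Longrightarrow> x \<in> carrier_vec n \<Longrightarrow> S ^\<^sub>m Suc k *\<^sub>v x = S ^\<^sub>m k *\<^sub>v (S *\<^sub>v (x :: real vec))"
  by (simp add: assoc_mult_mat_vec[of _ n n _ n])

lemma powv_0: "S \<in> carrier_mat n n \<Longrightarrow> x \<in> carrier_vec n \<Longrightarrow> S ^\<^sub>m 0 *\<^sub>v x = (x :: real vec)"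
  by (simp add: carrier_matD)

lemma powv_comm: "S \<in> carrier_mat n n \<Longrightarrow> x \<in> carrier_vec n \<Longrightarrow> S ^\<^sub>m k *\<^sub>v (S *\<^sub>v x) = S *\<^sub>v (S ^\<^sub>m k *\<^sub>v (x :: real vec))"
proof (induct k arbitrary: x)
  case 0 thus ?case by (simp add: powv_0)
next
  case (Suc k)
  have Sx: "S *\<^sub>v x \<in> carrier_vec n" using Suc.prems by simp
  have "S ^\<^sub>m Suc k *\<^sub>v (S *\<^sub>v x) = S ^\<^sub>m k *\<^sub>v (S *\<^sub>v (S *\<^sub>v x))" by (rule powv_Suc[OF Suc.prems(1) Sx])
  also have "\<dots> = S *\<^sub>v (S ^\<^sub>m k *\<^sub>v (S *\<^sub>v x))" by (rule Suc.hyps[OF Suc.prems(1) Sx])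
  also have "S ^\<^sub>m k *\<^sub>v (S *\<^sub>v x) = S ^\<^sub>m Suc k *\<^sub>v x" by (rule powv_Suc[OF Suc.prems, symmetric])
  finally show ?case .
qed

lemma powv_add: "S \<in> carrier_mat n n \<Longrightarrow> x \<in> carrier_vec n \<Longrightarrow> S ^\<^sub>m (a + b) *\<^sub>v x = S ^\<^sub>m a *\<^sub>v (S ^\<^sub>m b *\<^sub>v (x :: real vec))"
proof (induct a arbitrary: x)
  case 0 thus ?case by (simp add: powv_0)
next
  case (Suc a)
  note S = Suc.prems(1) and x = Suc.prems(2)
  have Sx: "S *\<^sub>v x \<in> carrier_vec n" "S ^\<^sub>m b *\<^sub>v x \<in> carrier_vec n" using S x by auto
  have "S ^\<^sub>m (Suc a + b) *\<^sub>v x = S ^\<^sub>m Suc (a + b) *\<^sub>v x" by simp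
  also have "\<dots> = S ^\<^sub>m (a + b) *\<^sub>v (S *\<^sub>v x)" by (rule powv_Suc[OF S x])
  also have "\<dots> = S *\<^sub>v (S ^\<^sub>m (a + b) *\<^sub>v x)" by (rule powv_comm[OF S x])
  also have "S ^\<^sub>m (a + b) *\<^sub>v x = S ^\<^sub>m a *\<^sub>v (S ^\<^sub>m b *\<^sub>v x)" by (rule Suc.hyps[OF S x])
  also have "S *\<^sub>v (S ^\<^sub>m a *\<^sub>v (S ^\<^sub>m b *\<^sub>v x)) = S ^\<^sub>m a *\<^sub>v (S *\<^sub>v (S ^\<^sub>m b *\<^sub>v x))" by (rule powv_comm[OF S Sx(2), symmetric])
  also have "\<dots> = S ^\<^sub>m Suc a *\<^sub>v (S ^\<^sub>m b *\<^sub>v x)" by (rule powv_Suc[OF S Sx(2), symmetric])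
  finally show ?case .
qed

lemma powv_sym: assumes S: "S \<in> carrier_mat n n" and sS: "transpose_mat S = S"
  shows "y \<in> carrier_vec n \<Longrightarrow> z \<in> carrier_vec n \<Longrightarrow> (S ^\<^sub>m k *\<^sub>v y) \<bullet> z = y \<bullet> (S ^\<^sub>m k *\<^sub>v (z :: real vec))"
proof (induct k arbitrary: y)
  case 0 thus ?case using S by (simp add: powv_0)
next
  case (Suc k)
  note y = Suc.prems(1) and z = Suc.prems(2)
  have Sy: "S *\<^sub>v y \<in> carrier_vec n" "S ^\<^sub>m k *\<^sub>v z \<in> carrier_vec n" using S y z by auto
  have "(S ^\<^sub>m Suc k *\<^sub>v y) \<bullet> z = (S ^\<^sub>m k *\<^sub>v (S *\<^sub>v y)) \<bullet> z" by (simp only: powv_Suc[OF S y])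
  also have "\<dots> = (S *\<^sub>v y) \<bullet> (S ^\<^sub>m k *\<^sub>v z)" by (rule Suc.hyps[OF Sy(1) z])
  also have "\<dots> = y \<bullet> (S *\<^sub>v (S ^\<^sub>m k *\<^sub>v z))" by (rule sym_sp[OF S sS y Sy(2)])
  also have "S *\<^sub>v (S ^\<^sub>m k *\<^sub>v z) = S ^\<^sub>m Suc k *\<^sub>v z" by (simp only: powv_Suc[OF S z] powv_comm[OF S z])
  finally show ?case .
qed




lemma sym_contract:
  fixes S :: "real mat"
  assumes S: "S \<in> carrier_mat n n" and sS: "transpose_mat S = S"
    and C: "\<And>k x. x \<in> carrier_vec n \<Longrightarrow> vnorm2 (S ^\<^sub>m k *\<^sub>v x) \<le> C * vnorm2 x"
    and x: "x \<in> carrier_vec n"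
  shows "vnorm2 (S *\<^sub>v x) \<le> vnorm2 x"
proof -
  have sq: "(vnorm2 (S ^\<^sub>m k *\<^sub>v y))^2 \<le> vnorm2 y * vnorm2 (S ^\<^sub>m (k + k) *\<^sub>v y)" if y: "y \<in> carrier_vec n" for k y
  proof -
    have "(vnorm2 (S ^\<^sub>m k *\<^sub>v y))^2 = (S ^\<^sub>m k *\<^sub>v y) \<bullet> (S ^\<^sub>m k *\<^sub>v y)" by (rule vnorm2_sq)
    also have "\<dots> = y \<bullet> (S ^\<^sub>m k *\<^sub>v (S ^\<^sub>m k *\<^sub>v y))" by (rule powv_sym[OF S sS y], use S y in simp)
    also have "\<dots> = y \<bullet> (S ^\<^sub>m (k + k) *\<^sub>v y)" using powv_add[OF S y] by simp
    also have "\<dots> \<le> vnorm2 y * vnorm2 (S ^\<^sub>m (k + k) *\<^sub>v y)"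
      by (rule order_trans[OF abs_ge_self cs_vnorm[OF y pv_carrier[OF S y]]])
    finally show ?thesis .
  qed
  define a where "a = vnorm2 (S *\<^sub>v x)"
  define b where "b = vnorm2 x"
  have a0: "a \<ge> 0" "b \<ge> 0" unfolding a_def b_def by (auto simp: vnorm2_nonneg)
  have P: "a ^ (2^j) \<le> b ^ (2^j - 1) * vnorm2 (S ^\<^sub>m (2^j) *\<^sub>v x)" for j
  proof (induct j)
    case 0 thus ?case using S x unfolding a_def by simp
  next
    case (Suc j)
    define m where "m = (2::nat)^j"
    have m1: "m \<ge> 1" unfolding m_def by simp
    have "a ^ (2^Suc j) = (a ^ m)^2" unfolding m_def by (simp add: power_mult[symmetric] mult.commute)
    also have "\<dots> \<le> (b ^ (m - 1) * vnorm2 (S ^\<^sub>m m *\<^sub>v x))^2"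
      by (rule power_mono, use Suc in \<open>simp add: m_def\<close>, use a0 in simp)
    also have "\<dots> = (b ^ (m - 1))^2 * (vnorm2 (S ^\<^sub>m m *\<^sub>v x))^2" by (simp add: power_mult_distrib)
    also have "\<dots> \<le> (b ^ (m - 1))^2 * (b * vnorm2 (S ^\<^sub>m (m + m) *\<^sub>v x))"
      by (rule mult_left_mono, use sq[OF x, of m] in \<open>simp add: b_def\<close>, use a0 in simp)
    also have "\<dots> = b ^ (2 * m - 1) * vnorm2 (S ^\<^sub>m (m + m) *\<^sub>v x)"
    proof -
      have "(b ^ (m - 1))^2 * b = b ^ (2*m - 1)"
      proof -
        obtain m' where m': "m = Suc m'" using m1 by (cases m) auto
        have "(b ^ (m - 1))^2 * b = b ^ (m' * 2 + 1)" unfolding m' by (simp add: power_mult power_add)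
        also have "m' * 2 + 1 = 2*m - 1" unfolding m' by simp
        finally show ?thesis .
      qed
      thus ?thesis by (simp add: mult.assoc)
    qed
    also have "\<dots> = b ^ (2 ^ Suc j - 1) * vnorm2 (S ^\<^sub>m (2 ^ Suc j) *\<^sub>v x)"
    proof -
      have "2 * m - 1 = 2 ^ Suc j - 1" "m + m = 2 ^ Suc j" unfolding m_def by auto
      thus ?thesis by simp
    qed
    finally show ?case .
  qed
  have P2: "a ^ (2^j) \<le> C * b ^ (2^j)" for j
  proof -
    have "a ^ (2^j) \<le> b ^ (2^j - 1) * (C * b)" using P[of j] C[OF x, of "2^j"] mult_left_mono[of _ "C * b" "b ^ (2^j - 1)"] a0
      unfolding b_def by (meson order_trans zero_le_power)
    also have "\<dots> = C * b ^ (2^j)"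
    proof -
      have "b ^ (2^j - 1) * b = b ^ (2^j)"
      proof -
        obtain t where t: "(2::nat)^j = Suc t" by (metis not0_implies_Suc power_not_zero zero_neq_numeral)
        show ?thesis unfolding t by (simp add: power_Suc2)
      qed
      thus ?thesis by (simp add: algebra_simps)
    qed
    finally show ?thesis .
  qed
  show ?thesis
  proof (rule ccontr)
    assume "\<not> ?thesis"
    hence ab: "a > b" unfolding a_def b_def by simp
    show False
    proof (cases "b = 0")
      case True
      with P2[of 0] ab show False by simp
    next
      case False
      hence bp: "b > 0" using a0 by simp
      define q where "q = a / b"
      have q1: "q > 1" using ab bp unfolding q_def by simp
      have qb: "q ^ (2^j) \<le> C" for j
      proof -
        have "q ^ (2^j) = a ^ (2^j) / b ^ (2^j)" unfolding q_def by (simp add: power_divide)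
        also have "\<dots> \<le> C" using P2[of j] bp by (simp add: divide_le_eq)
        finally show ?thesis .
      qed
      obtain j :: nat where j: "C < real j * (q - 1)" using reals_Archimedean3[of "q - 1"] q1 by auto
      have "1 + real j * (q - 1) \<le> (1 + (q - 1)) ^ j" by (rule Bernoulli_inequality, use q1 in simp)
      also have "\<dots> = q ^ j" by simp
      also have "\<dots> \<le> q ^ (2^j)" by (rule power_increasing, use less_exp[of j] in simp, use q1 in simp)
      finally show False using qb[of j] j by simp
    qed
  qed
qed

lemma md_mv: "v \<in> carrier_vec n \<Longrightarrow> mat_diag n f *\<^sub>v v = vec n (\<lambda>i. f i * v $ (i::nat) :: real)"
proof (rule eq_vecI)
  fix i assume v: "v \<in> carrier_vec n" and i: "i < dim_vec (vec n (\<lambda>i. f i * v $ i))"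
  hence i: "i < n" by simp
  have "(mat_diag n f *\<^sub>v v) $ i = (\<Sum>j\<in>{0..<n}. (if i = j then f i else 0) * v $ j)"
    using v i by (simp add: mat_diag_index scalar_prod_def)
  also have "\<dots> = (\<Sum>j\<in>{0..<n}. if i = j then f i * v $ j else 0)" by (rule sum.cong, auto)
  also have "\<dots> = f i * v $ i" using i by simp
  finally show "(mat_diag n f *\<^sub>v v) $ i = vec n (\<lambda>i. f i * v $ i) $ i" using i by simp
qed auto

lemma diag_quad: "v \<in> carrier_vec n \<Longrightarrow> (\<And>i. i < n \<Longrightarrow> (d::nat\<Rightarrow>real) i > 0) \<Longrightarrow>
   v \<bullet> (mat_diag n d *\<^sub>v v) = (mat_diag n (\<lambda>i. sqrt (d i)) *\<^sub>v v) \<bullet> (mat_diag n (\<lambda>i. sqrt (d i)) *\<^sub>v v)"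
  by (simp add: md_mv scalar_prod_def, rule sum.cong, auto simp: algebra_simps abs_of_pos)

lemma diag_quad_pos: assumes v: "v \<in> carrier_vec n" and d: "\<And>i. i < n \<Longrightarrow> (d::nat\<Rightarrow>real) i > 0"
  and z: "v \<bullet> (mat_diag n d *\<^sub>v v) = 0" shows "v = 0\<^sub>v n"
proof -
  let ?u = "mat_diag n (\<lambda>i. sqrt (d i)) *\<^sub>v v"
  have "?u \<bullet> ?u = 0" using diag_quad[OF v d] z by simp
  hence u0: "?u = 0\<^sub>v n" by (rule sp_self_zero[OF _ mult_mat_vec_carrier[OF mat_diag_dim v]])
  show ?thesis
  proof (rule eq_vecI)
    fix i assume "i < dim_vec (0\<^sub>v n)"
    hence i: "i < n" by simp
    have "?u $ i = 0" using u0 i by simp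
    hence "sqrt (d i) * v $ i = 0" using v i by (simp add: md_mv)
    thus "v $ i = 0\<^sub>v n $ i" using d[OF i] i by simp
  qed (use v in simp)
qed

lemma pd_abstract:
  fixes H :: "real mat"
  assumes d: "\<And>i. i < n \<Longrightarrow> d i > 0" and H: "H \<in> carrier_mat n n" and sH: "transpose_mat H = H"
    and hb: "hbar > 0" and dt: "dt > 0" and n: "n > 0"
    and cfl: "dt < 2 / rho ((1/hbar) \<cdot>\<^sub>m (mat_diag n (\<lambda>p. 1 / sqrt (d p)) * H * mat_diag n (\<lambda>p. 1 / sqrt (d p))))"
  shows "\<exists>r<1. \<forall>R I. R \<in> carrier_vec n \<longrightarrow> I \<in> carrier_vec n \<longrightarrow>
     (1 - r) * (R \<bullet> (mat_diag n d *\<^sub>v R) + I \<bullet> (mat_diag n d *\<^sub>v I)) \<le> Efun (mat_diag n d) H (dt/hbar) R I"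
proof -
  define Dm where "Dm = mat_diag n (\<lambda>p. 1 / sqrt (d p))"
  define Dh where "Dh = mat_diag n (\<lambda>p. sqrt (d p))"
  define M0 where "M0 = Dm * H * Dm"
  define Hh where "Hh = (1/hbar) \<cdot>\<^sub>m M0"
  have Dm: "Dm \<in> carrier_mat n n" "transpose_mat Dm = Dm" unfolding Dm_def by (auto simp: transpose_diag)
  have M0: "M0 \<in> carrier_mat n n" unfolding M0_def using Dm H by auto
  have sM0: "transpose_mat M0 = M0"
  proof -
    have "transpose_mat M0 = transpose_mat Dm * transpose_mat (Dm * H)"
      unfolding M0_def by (rule transpose_mult[of _ n n], use Dm H in auto)
    also have "transpose_mat (Dm * H) = transpose_mat H * transpose_mat Dm"
      by (rule transpose_mult[of _ n n], use Dm H in auto)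
    finally show ?thesis unfolding M0_def using Dm H sH by (simp add: assoc_mult_mat[of _ n n _ n _ n])
  qed
  have Hh: "Hh \<in> carrier_mat n n" "transpose_mat Hh = Hh" unfolding Hh_def using M0 sM0 by (auto simp: transpose_smult)
  define rh where "rh = rho Hh"
  have cfl': "dt < 2 / rh" using cfl unfolding rh_def Hh_def M0_def Dm_def .
  have rh0: "rh > 0"
  proof (rule ccontr)
    assume "\<not> rh > 0" hence "2 / rh \<le> 0" using divide_nonneg_nonpos[of 2 rh] by simp
    thus False using cfl' dt by linarith
  qed
  have dtr: "dt * rh < 2" using cfl' rh0 by (simp add: field_simps)
  define r where "r = (1 + dt * rh / 2) / 2"
  have p: "dt * rh > 0" by (rule mult_pos_pos[OF dt rh0])
  have r1: "r < 1" "r > 0" "dt * rh / 2 < r" using dtr p unfolding r_def by (simp_all add: field_simps)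
  define c where "c = dt / (2 * r)"
  have c0: "c > 0" unfolding c_def using dt r1 by simp
  define S where "S = c \<cdot>\<^sub>m Hh"
  have S: "S \<in> carrier_mat n n" "transpose_mat S = S" unfolding S_def using Hh by (auto simp: transpose_smult)
  have "rho S \<le> c * rh" unfolding S_def rh_def by (rule rho_smult_le[OF Hh(1) n c0])
  also have "c * rh < 1" unfolding c_def using r1 dt rh0 by (simp add: field_simps)
  finally have rS: "rho S < 1" .
  from pow_bounded[OF S(1) rS] obtain C where C: "\<And>k x. x \<in> carrier_vec n \<Longrightarrow> vnorm2 (S ^\<^sub>m k *\<^sub>v x) \<le> C * vnorm2 x" by blast
  have contr: "vnorm2 (S *\<^sub>v x) \<le> vnorm2 x" if "x \<in> carrier_vec n" for x
    by (rule sym_contract[OF S C that])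
  show ?thesis
  proof (intro exI[of _ r] conjI allI impI)
    show "r < 1" by (rule r1)
    fix R I :: "real vec" assume R: "R \<in> carrier_vec n" and I: "I \<in> carrier_vec n"
    define u where "u = Dh *\<^sub>v R"
    define v where "v = Dh *\<^sub>v I"
    have uv: "u \<in> carrier_vec n" "v \<in> carrier_vec n" unfolding u_def v_def Dh_def
      by (rule mult_mat_vec_carrier[OF mat_diag_dim R], rule mult_mat_vec_carrier[OF mat_diag_dim I])
    have dne: "\<And>i. i < n \<Longrightarrow> d i \<noteq> 0" using d by (metis less_irrefl)
    have Ru: "R = Dm *\<^sub>v u" unfolding u_def Dm_def Dh_def using R d
      by (intro eq_vecI, auto simp: md_mv dne)
    have Iv: "I = Dm *\<^sub>v v" unfolding v_def Dm_def Dh_def using I d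
      by (intro eq_vecI, auto simp: md_mv dne)
    have qR: "R \<bullet> (mat_diag n d *\<^sub>v R) = u \<bullet> u" unfolding u_def Dh_def by (rule diag_quad[OF R d])
    have qI: "I \<bullet> (mat_diag n d *\<^sub>v I) = v \<bullet> v" unfolding v_def Dh_def by (rule diag_quad[OF I d])
    have "R \<bullet> (H *\<^sub>v I) = (Dm *\<^sub>v u) \<bullet> (H *\<^sub>v (Dm *\<^sub>v v))" using Ru Iv by simp
    also have "\<dots> = u \<bullet> (Dm *\<^sub>v (H *\<^sub>v (Dm *\<^sub>v v)))" by (rule sym_sp[OF Dm uv(1)], use H Dm uv in simp)
    also have "Dm *\<^sub>v (H *\<^sub>v (Dm *\<^sub>v v)) = M0 *\<^sub>v v"
    proof -
      have "M0 *\<^sub>v v = (Dm * H) *\<^sub>v (Dm *\<^sub>v v)" unfolding M0_def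
        by (rule assoc_mult_mat_vec[of _ n n _ n], use Dm H uv in auto)
      also have "\<dots> = Dm *\<^sub>v (H *\<^sub>v (Dm *\<^sub>v v))"
        by (rule assoc_mult_mat_vec[of _ n n _ n], use Dm H uv in auto)
      finally show ?thesis by simp
    qed
    also have "M0 *\<^sub>v v = (hbar / c) \<cdot>\<^sub>v (S *\<^sub>v v)" unfolding S_def Hh_def
      using M0 uv hb c0 by (simp add: smult_mat_vec[of _ n] smult_smult_assoc)
    finally have RHI: "R \<bullet> (H *\<^sub>v I) = (hbar / c) * (u \<bullet> (S *\<^sub>v v))" using uv S by simp
    have "(dt/hbar) * (R \<bullet> (H *\<^sub>v I)) = 2 * r * (u \<bullet> (S *\<^sub>v v))"
      unfolding RHI c_def using hb dt r1 by (simp add: field_simps)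
    moreover have "\<bar>u \<bullet> (S *\<^sub>v v)\<bar> \<le> (u \<bullet> u + v \<bullet> v) / 2"
    proof -
      have "\<bar>u \<bullet> (S *\<^sub>v v)\<bar> \<le> vnorm2 u * vnorm2 (S *\<^sub>v v)" by (rule cs_vnorm[OF uv(1)], use S uv in simp)
      also have "\<dots> \<le> vnorm2 u * vnorm2 v" by (rule mult_left_mono[OF contr[OF uv(2)] vnorm2_nonneg])
      also have "\<dots> \<le> ((vnorm2 u)^2 + (vnorm2 v)^2) / 2"
        using sum_squares_bound[of "vnorm2 u" "vnorm2 v"] by (simp add: mult.assoc)
      finally show ?thesis by (simp add: vnorm2_sq)
    qed
    ultimately have e1: "(dt/hbar) * (R \<bullet> (H *\<^sub>v I)) = r * (2 * (u \<bullet> (S *\<^sub>v v)))"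
      and e2: "2 * (u \<bullet> (S *\<^sub>v v)) \<le> u \<bullet> u + v \<bullet> v" by auto
    have e3: "r * (2 * (u \<bullet> (S *\<^sub>v v))) \<le> r * (u \<bullet> u + v \<bullet> v)"
      by (rule mult_left_mono[OF e2], use r1 in simp)
    show "(1 - r) * (R \<bullet> (mat_diag n d *\<^sub>v R) + I \<bullet> (mat_diag n d *\<^sub>v I)) \<le> Efun (mat_diag n d) H (dt/hbar) R I"
      unfolding Efun_def qR qI e1 using e3 by (simp add: algebra_simps)
  qed
qed

lemma P_quad:
  fixes D H :: "real mat"
  assumes D: "D \<in> carrier_mat n n" and sD: "transpose_mat D = D"
    and H: "H \<in> carrier_mat n n" and sH: "transpose_mat H = H"
    and R: "R \<in> carrier_vec n" and I: "I \<in> carrier_vec n"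
  shows "(four_block_mat D (c \<cdot>\<^sub>m H) (c \<cdot>\<^sub>m H) D *\<^sub>v (R @\<^sub>v I)) \<bullet> (R @\<^sub>v I) = Efun D H (-2*c) R I"
proof -
  have cH: "c \<cdot>\<^sub>m H \<in> carrier_mat n n" using H by simp
  have "four_block_mat D (c \<cdot>\<^sub>m H) (c \<cdot>\<^sub>m H) D *\<^sub>v (R @\<^sub>v I) =
     (D *\<^sub>v R + (c \<cdot>\<^sub>m H) *\<^sub>v I) @\<^sub>v ((c \<cdot>\<^sub>m H) *\<^sub>v R + D *\<^sub>v I)"
    by (rule four_block_mat_mult_vec[OF D cH cH D R I])
  also have "\<dots> \<bullet> (R @\<^sub>v I) = (D *\<^sub>v R + (c \<cdot>\<^sub>m H) *\<^sub>v I) \<bullet> R + ((c \<cdot>\<^sub>m H) *\<^sub>v R + D *\<^sub>v I) \<bullet> I"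
    using mult_mat_vec_carrier[OF D R] mult_mat_vec_carrier[OF D I] mult_mat_vec_carrier[OF cH R]
      mult_mat_vec_carrier[OF cH I] R I by (intro scalar_prod_append) auto
  also have "\<dots> = (D *\<^sub>v R) \<bullet> R + c * ((H *\<^sub>v I) \<bullet> R) + c * ((H *\<^sub>v R) \<bullet> I) + (D *\<^sub>v I) \<bullet> I"
    using D H R I by (simp add: smult_mat_vec[of _ n] add_scalar_prod_distrib[of _ n])
  also have "(D *\<^sub>v R) \<bullet> R = R \<bullet> (D *\<^sub>v R)" by (rule comm_scalar_prod[of _ n], use D R in auto)
  also have "(D *\<^sub>v I) \<bullet> I = I \<bullet> (D *\<^sub>v I)" by (rule comm_scalar_prod[of _ n], use D I in auto)
  also have "(H *\<^sub>v R) \<bullet> I = R \<bullet> (H *\<^sub>v I)" by (rule sym_sp[OF H sH R I])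
  also have "(H *\<^sub>v I) \<bullet> R = R \<bullet> (H *\<^sub>v I)"
    using sym_sp[OF H sH I R] comm_scalar_prod[of I n "H *\<^sub>v R"] sym_sp[OF H sH R I] H R I by simp
  finally show ?thesis unfolding Efun_def by (simp add: algebra_simps)
qed

lemma quad_upper:
  fixes P :: "real mat"
  assumes P: "P \<in> carrier_mat k k" and x: "x \<in> carrier_vec k"
  shows "(P *\<^sub>v x) \<bullet> x \<le> mnorm2 P * (vnorm2 x)^2"
proof -
  have "(P *\<^sub>v x) \<bullet> x \<le> vnorm2 (P *\<^sub>v x) * vnorm2 x"
    by (rule order_trans[OF abs_ge_self cs_vnorm], use P x in auto)
  also have "\<dots> \<le> mnorm2 P * vnorm2 x * vnorm2 x"
    by (rule mult_right_mono[OF mnorm2_bound[OF P x] vnorm2_nonneg])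
  finally show ?thesis by (simp add: power2_eq_square mult.assoc)
qed

lemma quad_lower:
  fixes P Pi :: "real mat"
  assumes P: "P \<in> carrier_mat k k" and sP: "transpose_mat P = P"
    and psd: "\<And>z. z \<in> carrier_vec k \<Longrightarrow> 0 \<le> (P *\<^sub>v z) \<bullet> z"
    and inv: "mat_inverse P = Some Pi" and x: "x \<in> carrier_vec k"
  shows "(vnorm2 x)^2 \<le> mnorm2 Pi * ((P *\<^sub>v x) \<bullet> x)"
proof -
  from mat_inverse(2)[OF P inv] have PPi: "P * Pi = 1\<^sub>m k" and Pi: "Pi \<in> carrier_mat k k" by auto
  define w where "w = Pi *\<^sub>v x"
  have w: "w \<in> carrier_vec k" unfolding w_def using Pi x by simp
  have Pw: "P *\<^sub>v w = x" unfolding w_def using PPi P Pi x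
    by (metis assoc_mult_mat_vec one_mult_mat_vec)
  define a where "a = x \<bullet> x"
  define Q where "Q = (P *\<^sub>v x) \<bullet> x"
  have a0: "a \<ge> 0" unfolding a_def by (rule sp_self_nonneg)
  have Q0: "Q \<ge> 0" unfolding Q_def by (rule psd[OF x])
  have "a^2 = ((P *\<^sub>v w) \<bullet> x)^2" unfolding a_def Pw ..
  also have "\<dots> \<le> ((P *\<^sub>v w) \<bullet> w) * Q" unfolding Q_def by (rule cs_form[OF P sP psd w x])
  also have "(P *\<^sub>v w) \<bullet> w = x \<bullet> (Pi *\<^sub>v x)" by (subst Pw) (simp add: w_def)
  also have "\<dots> \<le> mnorm2 Pi * a"
  proof -
    have "x \<bullet> (Pi *\<^sub>v x) \<le> vnorm2 x * vnorm2 (Pi *\<^sub>v x)"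
      by (rule order_trans[OF abs_ge_self cs_vnorm], use Pi x in auto)
    also have "\<dots> \<le> vnorm2 x * (mnorm2 Pi * vnorm2 x)"
      by (rule mult_left_mono[OF mnorm2_bound[OF Pi x] vnorm2_nonneg])
    also have "\<dots> = mnorm2 Pi * a" unfolding a_def vnorm2_sq[symmetric] by (simp add: power2_eq_square)
    finally show ?thesis .
  qed
  hence "x \<bullet> (Pi *\<^sub>v x) * Q \<le> mnorm2 Pi * a * Q" using Q0 by (rule mult_right_mono)
  finally have le: "a * a \<le> a * (mnorm2 Pi * Q)" by (simp add: power2_eq_square algebra_simps)
  show ?thesis
  proof (cases "a = 0")
    case True
    hence "x = 0\<^sub>v k" using sp_self_zero x unfolding a_def by blast
    thus ?thesis using P unfolding vnorm2_def by simp
  next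
    case False
    hence "a > 0" using a0 by simp
    hence "a \<le> mnorm2 Pi * Q" using le by simp
    thus ?thesis unfolding a_def Q_def vnorm2_sq .
  qed
qed

theorem lemma3:
  fixes hbar m dx dy dz dt :: real
    and nx ny nz nt :: nat
    and U :: "nat \<Rightarrow> nat \<Rightarrow> nat \<Rightarrow> real"
    and psiR psiI gR gI :: "nat \<Rightarrow> real vec"
  defines "N \<equiv> Nn nx ny nz"
    and "M \<equiv> Mn nx ny nz"
    and "H \<equiv> Hmat hbar m dx dy dz nx ny nz U"
    and "DVm \<equiv> DV dx dy dz nx ny nz"
    and "Hp \<equiv> Hperp hbar m dx dy dz nx ny nz"
    and "psi \<equiv> (\<lambda>n. psiR n @\<^sub>v psiI n)"
    and "g \<equiv> (\<lambda>n. gR n @\<^sub>v gI n)"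
  assumes hbar: "hbar > 0" and mpos: "m > 0"
    and dxpos: "dx > 0" and dypos: "dy > 0" and dzpos: "dz > 0"
    and nxpos: "nx > 0" and nypos: "ny > 0" and nzpos: "nz > 0" and ntpos: "nt > 0"
    and dtpos: "dt > 0"
    and cfl: "dt < dt_cfl hbar m dx dy dz nx ny nz U"
    and dimR: "\<And>n. n \<le> nt \<Longrightarrow> psiR n \<in> carrier_vec N"
    and dimI: "\<And>n. n \<le> nt \<Longrightarrow> psiI n \<in> carrier_vec N"
    and dimgR: "\<And>n. n < nt \<Longrightarrow> gR n \<in> carrier_vec M"
    and dimgI: "\<And>n. n < nt \<Longrightarrow> gI n \<in> carrier_vec M"
    and schemeR: "\<And>n. n < nt \<Longrightarrow>
       hbar \<cdot>\<^sub>v (DVm *\<^sub>v ((1/dt) \<cdot>\<^sub>v (psiR (Suc n) - psiR n)))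
         = H *\<^sub>v psiI (Suc n) - Hp *\<^sub>v gI n"
    and schemeI: "\<And>n. n < nt \<Longrightarrow>
       hbar \<cdot>\<^sub>v (DVm *\<^sub>v ((1/dt) \<cdot>\<^sub>v (psiI (Suc n) - psiI n)))
         = - (H *\<^sub>v psiR n) + Hp *\<^sub>v gR n"
    and current: "\<And>n. n < nt \<Longrightarrow>
       (2/hbar) * (((1/2) \<cdot>\<^sub>v (psi (Suc n) + psi n)) \<bullet> (J1kron Hp *\<^sub>v g n)) = 0"
  shows "\<forall>n\<le>nt. vnorm2 (psi n)
           \<le> sqrt (cond2 (Pmat hbar m dx dy dz nx ny nz U dt)) * vnorm2 (psi 0)"
proof -
  let ?N' = "(nz+1)*((ny+1)*(nx+1))"
  have NN: "N = ?N'" unfolding N_def by (rule Nn_eq)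
  have Npos: "N > 0" unfolding NN by simp
  obtain d where dDV: "DV dx dy dz nx ny nz = mat_diag ?N' d" and dpos': "dx > 0 \<longrightarrow> dy > 0 \<longrightarrow> dz > 0 \<longrightarrow> (\<forall>i. d i > 0)"
    using DV_diag by blast
  have dpos: "\<And>i. d i > 0" using dpos' dxpos dypos dzpos by blast
  have DVd: "DVm = mat_diag N d" unfolding DVm_def dDV NN ..
  have DVc: "DVm \<in> carrier_mat N N" "transpose_mat DVm = DVm" unfolding DVd by (auto simp: transpose_diag)
  have "H \<in> carrier_mat N N \<and> transpose_mat H = H" unfolding H_def N_def by (rule H_struct[OF dxpos dypos dzpos])
  hence Hc: "H \<in> carrier_mat N N" and sH: "transpose_mat H = H" by auto
  have Hpc: "Hp \<in> carrier_mat N M" unfolding Hp_def N_def M_def by (rule Hp_carrier)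
  have Dmh: "DVmhalf dx dy dz nx ny nz = mat_diag N (\<lambda>p. 1 / sqrt (d p))"
    unfolding DVmhalf_def N_def[symmetric] DVm_def[symmetric] DVd
    by (rule eq_matI, auto simp: mat_diag_index)
  have cfl': "dt < 2 / rho ((1/hbar) \<cdot>\<^sub>m (mat_diag N (\<lambda>p. 1 / sqrt (d p)) * H * mat_diag N (\<lambda>p. 1 / sqrt (d p))))"
    using cfl unfolding dt_cfl_def Dmh H_def .
  from pd_abstract[of N d H hbar dt, OF _ Hc sH hbar dtpos Npos cfl'] dpos
  obtain r where r1: "r < 1" and pd: "\<And>R I. R \<in> carrier_vec N \<Longrightarrow> I \<in> carrier_vec N \<Longrightarrow>
     (1 - r) * (R \<bullet> (DVm *\<^sub>v R) + I \<bullet> (DVm *\<^sub>v I)) \<le> Efun DVm H (dt/hbar) R I"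
    unfolding DVd by blast
  define c where "c = - dt / (2 * hbar)"
  define P where "P = four_block_mat DVm (c \<cdot>\<^sub>m H) (c \<cdot>\<^sub>m H) DVm"
  have Peq: "Pmat hbar m dx dy dz nx ny nz U dt = P"
    unfolding P_def Pmat_def Let_def H_def DVm_def c_def by simp
  have cH: "c \<cdot>\<^sub>m H \<in> carrier_mat N N" using Hc by simp
  have Pc: "P \<in> carrier_mat (N + N) (N + N)" unfolding P_def using DVc Hc by simp
  have sP: "transpose_mat P = P" unfolding P_def
    using transpose_four_block_mat[OF DVc(1) cH cH DVc(1)] DVc sH by (simp add: transpose_smult)
  have c2: "-2 * c = dt / hbar" unfolding c_def using hbar by simp
  have Pquad: "(P *\<^sub>v (R @\<^sub>v I)) \<bullet> (R @\<^sub>v I) = Efun DVm H (dt/hbar) R I"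
    if "R \<in> carrier_vec N" "I \<in> carrier_vec N" for R I
    unfolding P_def c2[symmetric] by (rule P_quad[OF DVc Hc sH that])
  have qnn: "0 \<le> R \<bullet> (DVm *\<^sub>v R)" if "R \<in> carrier_vec N" for R
    unfolding DVd using diag_quad[OF that, of d] dpos sp_self_nonneg by simp
  have split: "z = vec_first z N @\<^sub>v vec_last z N" "vec_first z N \<in> carrier_vec N" "vec_last z N \<in> carrier_vec N"
    if "z \<in> carrier_vec (N + N)" for z
    using that by auto
  have psd: "0 \<le> (P *\<^sub>v z) \<bullet> z" if z: "z \<in> carrier_vec (N + N)" for z
  proof -
    note sp = split[OF z]
    have "0 \<le> (1 - r) * (vec_first z N \<bullet> (DVm *\<^sub>v vec_first z N) + vec_last z N \<bullet> (DVm *\<^sub>v vec_last z N))"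
      using r1 qnn[OF sp(2)] qnn[OF sp(3)] by simp
    also have "\<dots> \<le> (P *\<^sub>v z) \<bullet> z" using pd[OF sp(2,3)] Pquad[OF sp(2,3)] sp(1) by simp
    finally show ?thesis .
  qed
  have Pinj: "z = 0\<^sub>v (N + N)" if z: "z \<in> carrier_vec (N + N)" and Pz: "P *\<^sub>v z = 0\<^sub>v (N + N)" for z
  proof -
    note sp = split[OF z]
    define R where "R = vec_first z N"
    define I where "I = vec_last z N"
    have RI: "R \<in> carrier_vec N" "I \<in> carrier_vec N" "z = R @\<^sub>v I" using sp unfolding R_def I_def by auto
    have "(P *\<^sub>v z) \<bullet> z = 0" using Pz z by simp
    hence "(1 - r) * (R \<bullet> (DVm *\<^sub>v R) + I \<bullet> (DVm *\<^sub>v I)) \<le> 0" using pd[OF RI(1,2)] Pquad[OF RI(1,2)] RI(3) by simp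
    hence "R \<bullet> (DVm *\<^sub>v R) + I \<bullet> (DVm *\<^sub>v I) \<le> 0" using r1 by (simp add: mult_le_0_iff)
    hence "R \<bullet> (DVm *\<^sub>v R) = 0" "I \<bullet> (DVm *\<^sub>v I) = 0" using qnn[OF RI(1)] qnn[OF RI(2)] by auto
    hence "R = 0\<^sub>v N" "I = 0\<^sub>v N" unfolding DVd using diag_quad_pos[OF RI(1), of d] diag_quad_pos[OF RI(2), of d] dpos by auto
    thus ?thesis using RI(3) by (auto simp: zero_vec_def)
  qed
  have "det P \<noteq> 0"
  proof
    assume "det P = 0"
    then obtain z where "z \<in> carrier_vec (N + N)" "z \<noteq> 0\<^sub>v (N + N)" "P *\<^sub>v z = 0\<^sub>v (N + N)"
      using det_0_iff_vec_prod_zero[OF Pc] by blast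
    thus False using Pinj by blast
  qed
  hence "P \<in> Units (ring_mat TYPE(real) (N + N) ())" by (rule det_non_zero_imp_unit[OF Pc])
  hence "mat_inverse P \<noteq> None" using mat_inverse(1)[OF Pc, of "()"] by auto
  then obtain Pi where inv: "mat_inverse P = Some Pi" by auto
  have psi_c: "psi n \<in> carrier_vec (N + N)" if "n \<le> nt" for n
    unfolding psi_def using dimR[OF that] dimI[OF that] by auto
  define E where "E = (\<lambda>n. Efun DVm H (dt/hbar) (psiR n) (psiI n))"
  have Eq: "E n = (P *\<^sub>v psi n) \<bullet> psi n" if "n \<le> nt" for n
    unfolding E_def psi_def using Pquad[OF dimR[OF that] dimI[OF that]] by simp
  have cons: "E n = E 0" if "n \<le> nt" for n
    using that
  proof (induct n)
    case 0 thus ?case by simp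
  next
    case (Suc n)
    hence n: "n < nt" "n \<le> nt" "Suc n \<le> nt" by auto
    note cR = dimR[OF n(2)] dimR[OF n(3)] and cI = dimI[OF n(2)] dimI[OF n(3)]
    have uR: "Hp *\<^sub>v gR n \<in> carrier_vec N" using Hpc dimgR[OF n(1)] by simp
    have uI: "Hp *\<^sub>v gI n \<in> carrier_vec N" using Hpc dimgI[OF n(1)] by simp
    have step: "E (Suc n) - E n = - (dt/hbar) * ((psiR (Suc n) + psiR n) \<bullet> (Hp *\<^sub>v gI n) - (psiI (Suc n) + psiI n) \<bullet> (Hp *\<^sub>v gR n))"
      unfolding E_def
      by (rule energy_step[OF DVc(1) Hc DVc(2) sH cR(1) cR(2) cI(1) cI(2) uR uI _ _ schemeR[OF n(1)] schemeI[OF n(1)]],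
          use hbar dtpos in auto)
    have J: "J1kron Hp *\<^sub>v g n = (Hp *\<^sub>v gI n) @\<^sub>v (- (Hp *\<^sub>v gR n))"
      unfolding g_def by (rule J1kron_mult[OF Hpc dimgR[OF n(1)] dimgI[OF n(1)]])
    have sum: "psi (Suc n) + psi n = (psiR (Suc n) + psiR n) @\<^sub>v (psiI (Suc n) + psiI n)"
      unfolding psi_def by (rule append_vec_add[OF cR(2) cR(1) cI(2) cI(1)])
    have "((psi (Suc n) + psi n)) \<bullet> (J1kron Hp *\<^sub>v g n)
       = (psiR (Suc n) + psiR n) \<bullet> (Hp *\<^sub>v gI n) + (psiI (Suc n) + psiI n) \<bullet> (- (Hp *\<^sub>v gR n))"
      unfolding sum J by (rule scalar_prod_append, use cR cI uR uI in auto)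
    also have "(psiI (Suc n) + psiI n) \<bullet> (- (Hp *\<^sub>v gR n)) = - ((psiI (Suc n) + psiI n) \<bullet> (Hp *\<^sub>v gR n))"
      by (rule scalar_prod_uminus_right, use cI uR Hpc in auto)
    finally have cur: "((psi (Suc n) + psi n)) \<bullet> (J1kron Hp *\<^sub>v g n) =
       (psiR (Suc n) + psiR n) \<bullet> (Hp *\<^sub>v gI n) - (psiI (Suc n) + psiI n) \<bullet> (Hp *\<^sub>v gR n)" by simp
    have Jc: "J1kron Hp *\<^sub>v g n \<in> carrier_vec (N + N)" unfolding J using uI uR by auto
    have sc: "psi (Suc n) + psi n \<in> carrier_vec (N + N)" using psi_c[OF n(3)] psi_c[OF n(2)] by simp
    have "(2/hbar) * ((1/2) * ((psi (Suc n) + psi n) \<bullet> (J1kron Hp *\<^sub>v g n))) = 0"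
      using current[OF n(1)] smult_scalar_prod_distrib[OF sc Jc, of "1/2"] by simp
    hence "(psi (Suc n) + psi n) \<bullet> (J1kron Hp *\<^sub>v g n) = 0" using hbar by simp
    hence "E (Suc n) - E n = 0" unfolding step cur[symmetric] by simp
    thus ?case using Suc(1) n(2) by simp
  qed
  have Pi_c: "Pi \<in> carrier_mat (N + N) (N + N)" using mat_inverse(2)[OF Pc inv] by auto
  have mPi: "mnorm2 Pi \<ge> 0"
  proof -
    let ?e = "unit_vec (N + N) 0 :: real vec"
    have ec: "?e \<in> carrier_vec (N + N)" by simp
    have "?e \<noteq> 0\<^sub>v (N + N)" using Npos by simp
    hence "?e \<bullet> ?e \<noteq> 0"
    proof (intro notI)
      assume "?e \<bullet> ?e = 0"
      hence "?e = 0\<^sub>v (N + N)" by (rule sp_self_zero[OF _ ec])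
      thus False using \<open>?e \<noteq> 0\<^sub>v (N + N)\<close> by simp
    qed
    hence pos: "(vnorm2 ?e)^2 > 0" using sp_self_nonneg[of ?e] unfolding vnorm2_sq by simp
    have "(vnorm2 ?e)^2 \<le> mnorm2 Pi * ((P *\<^sub>v ?e) \<bullet> ?e)" by (rule quad_lower[OF Pc sP psd inv ec])
    show ?thesis
    proof (rule ccontr)
      assume "\<not> mnorm2 Pi \<ge> 0"
      hence "mnorm2 Pi * ((P *\<^sub>v ?e) \<bullet> ?e) \<le> 0" using psd[OF ec] by (simp add: mult_nonpos_nonneg)
      thus False using pos \<open>(vnorm2 ?e)^2 \<le> mnorm2 Pi * ((P *\<^sub>v ?e) \<bullet> ?e)\<close> by linarith
    qed
  qed
  show ?thesis
  proof (intro allI impI)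
    fix n assume n: "n \<le> nt"
    have "(vnorm2 (psi n))^2 \<le> mnorm2 Pi * ((P *\<^sub>v psi n) \<bullet> psi n)"
      by (rule quad_lower[OF Pc sP psd inv psi_c[OF n]])
    also have "(P *\<^sub>v psi n) \<bullet> psi n = (P *\<^sub>v psi 0) \<bullet> psi 0" using cons[OF n] Eq[OF n] Eq[of 0] by simp
    also have "mnorm2 Pi * \<dots> \<le> mnorm2 Pi * (mnorm2 P * (vnorm2 (psi 0))^2)"
      by (rule mult_left_mono[OF quad_upper[OF Pc psi_c] mPi], simp)
    also have "\<dots> = cond2 (Pmat hbar m dx dy dz nx ny nz U dt) * (vnorm2 (psi 0))^2"
      unfolding Peq cond2_def inv by simp
    finally have le: "(vnorm2 (psi n))^2 \<le> cond2 (Pmat hbar m dx dy dz nx ny nz U dt) * (vnorm2 (psi 0))^2" .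
    hence "sqrt ((vnorm2 (psi n))^2) \<le> sqrt (cond2 (Pmat hbar m dx dy dz nx ny nz U dt) * (vnorm2 (psi 0))^2)"
      by (rule real_sqrt_le_mono)
    thus "vnorm2 (psi n) \<le> sqrt (cond2 (Pmat hbar m dx dy dz nx ny nz U dt)) * vnorm2 (psi 0)"
      using vnorm2_nonneg[of "psi n"] vnorm2_nonneg[of "psi 0"] by (simp add: real_sqrt_mult)
  qed
qed


end
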